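(* In the setting of the splitting scheme described in the context, there exists a constant $C>0$, independent of $h$ and $R$, such that $$\sum_{n=1}^N\mathcal{W}_h(\bar f^n_{h,R},f^n_{h,R})^2\le C\Big(h\int_{\mathbb{R}^{2d}}\Psi(v)f_0(x,v)\,dx\,dv+T\|D^2\Psi\|_{\infty}\big(h^{1/2}+hR^{2-2s}\big)\Big).$$
   Context: Fix $d\ge1$, $s\in(0,1]$, $T>0$, $N\in\mathbb{N}$, $h=T/N$, $t_n=nh$, and $R>0$. Let $\Psi:\mathbb{R}^d\to[0,\infty)$ with $\Psi\in C^{1,1}\cap C^{2,1}(\mathbb{R}^d)$, and $f_0\in\mathcal{P}^2_a(\mathbb{R}^{2d})$ (probability densities on $\mathbb{R}^{2d}$, points $(x,v)$, with finite second moment) with $\int\Psi(v)f_0\,dx\,dv<\infty$. Let $\Phi_s(\cdot,t)$ be the probability density on $\mathbb{R}^d$ with Fourier transform $e^{-t|\xi|^{2s}}$, $\Phi^h_s:=\Phi_s(\cdot,h)$, and $\Phi^h_{s,R}:=\Phi^h_s\mathbf{1}_{B_R}$ ($B_R$ the centred ball of radius $R$). Cost: $C_h(x,v;x',v')=|v'-v|^2+12|\frac{x'-x}{h}-\frac{v'+v}{2}|^2$, and $\mathcal{W}_h(\mu,\nu)^2=\min_{p\in\mathcal{P}(\mu,\nu)}\int C_h\,dp$ over couplings $p$ with first marginal $\mu$, second marginal $\nu$. Scheme: $f^0_{h,R}=f_0$; for $n=1,\dots,N$, $\bar f^n_{h,R}(x,v):=\|\Phi^h_{s,R}\|_{L^1}^{-1}\int_{\mathbb{R}^d}\Phi^h_{s,R}(w)f^{n-1}_{h,R}(x,v-w)\,dw$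 and $f^n_{h,R}$ is the unique minimizer over $\mathcal{P}^2_a(\mathbb{R}^{2d})$ of $f\mapsto\frac1{2h}\mathcal{W}_h(\bar f^n_{h,R},f)^2+\int\Psi(v)f\,dx\,dv$ ($h$ is assumed small enough that this minimizer exists and is unique). *)

theory Defs
  imports "HOL-Probability.Probability"
begin

text \<open>Phase space points are pairs (x,v) in 'a \<times> 'a, with 'a a Euclidean space of dimension d.
  Densities are real-valued functions on the product, w.r.t. Lebesgue measure.\<close>

definition P2a :: "('a::euclidean_space \<times> 'a \<Rightarrow> real) set" where
  "P2a = {f. f \<in> borel_measurable borel \<and> (\<forall>z. 0 \<le> f z)
            \<and> integrable lborel f \<and> integral\<^sup>L lborel f = 1
            \<and> integrable lborel (\<lambda>z. (norm z)\<^sup>2 * f z)}"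

definition cost_h :: "real \<Rightarrow> ('a::euclidean_space \<times> 'a) \<times> ('a \<times> 'a) \<Rightarrow> real" where
  "cost_h h z = (case z of ((x, v), (x', v')) \<Rightarrow>
      (norm (v' - v))\<^sup>2 + 12 * (norm ((1 / h) *\<^sub>R (x' - x) - (1/2) *\<^sub>R (v' + v)))\<^sup>2)"

definition couplings :: "('a::euclidean_space \<times> 'a \<Rightarrow> real) \<Rightarrow> ('a \<times> 'a \<Rightarrow> real)
     \<Rightarrow> (('a \<times> 'a) \<times> ('a \<times> 'a)) measure set" where
  "couplings \<mu> \<nu> = {p. sets p = sets borel \<and> prob_space p
      \<and> distr p borel fst = density lborel (\<lambda>z. ennreal (\<mu> z))
      \<and> distr p borel snd = density lborel (\<lambda>z. ennreal (\<nu> z))}"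

definition Wh2 :: "real \<Rightarrow> ('a::euclidean_space \<times> 'a \<Rightarrow> real) \<Rightarrow> ('a \<times> 'a \<Rightarrow> real) \<Rightarrow> ennreal" where
  "Wh2 h \<mu> \<nu> = (INF p\<in>couplings \<mu> \<nu>. \<integral>\<^sup>+ z. ennreal (cost_h h z) \<partial>p)"

definition frac_heat_kernel :: "real \<Rightarrow> real \<Rightarrow> ('a::euclidean_space \<Rightarrow> real) \<Rightarrow> bool" where
  "frac_heat_kernel s t phi \<longleftrightarrow> phi \<in> borel_measurable borel \<and> (\<forall>w. 0 \<le> phi w)
     \<and> integrable lborel phi \<and> integral\<^sup>L lborel phi = 1
     \<and> (\<forall>\<xi>. integrable lborel (\<lambda>w. complex_of_real (phi w) * cis (- (\<xi> \<bullet> w)))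
          \<and> (\<integral>w. complex_of_real (phi w) * cis (- (\<xi> \<bullet> w)) \<partial>lborel)
             = complex_of_real (exp (- (t * norm \<xi> powr (2 * s)))))"

definition trunc_conv :: "('a::euclidean_space \<Rightarrow> real) \<Rightarrow> real \<Rightarrow> ('a \<times> 'a \<Rightarrow> real) \<Rightarrow> ('a \<times> 'a \<Rightarrow> real)" where
  "trunc_conv phi R f = (\<lambda>(x, v).
      (\<integral>w. indicator (cball 0 R) w * phi w * f (x, v - w) \<partial>lborel)
      / (\<integral>w. indicator (cball 0 R) w * phi w \<partial>lborel))"

definition JKO_functional :: "real \<Rightarrow> ('a::euclidean_space \<Rightarrow> real) \<Rightarrow> ('a \<times> 'a \<Rightarrow> real)
    \<Rightarrow> ('a \<times> 'a \<Rightarrow> real) \<Rightarrow> ennreal" where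
  "JKO_functional h Psi fbar f =
     ennreal (1 / (2 * h)) * Wh2 h fbar f + (\<integral>\<^sup>+ z. ennreal (Psi (snd z) * f z) \<partial>lborel)"

end

theory Submission
  imports Defs "HOL-Real_Asymp.Real_Asymp"
begin

inductive trigf :: "('a::euclidean_space \<Rightarrow> real) \<Rightarrow> bool" where
  tcos: "trigf (\<lambda>w. c * cos (\<xi> \<bullet> w))"
| tsin: "trigf (\<lambda>w. c * sin (\<xi> \<bullet> w))"
| tadd: "trigf f \<Longrightarrow> trigf g \<Longrightarrow> trigf (\<lambda>w. f w + g w)"

lemma trigf_const: "trigf (\<lambda>w::'a::euclidean_space. c)"
proof -
  have "trigf (\<lambda>w::'a. c * cos ((0::'a) \<bullet> w))" by (rule tcos)
  thus ?thesis by simp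
qed

lemma trigf_cmult: "trigf f \<Longrightarrow> trigf (\<lambda>w. a * f w)"
proof (induction rule: trigf.induct)
  case (tcos c \<xi>) show ?case using trigf.tcos[of "a*c" \<xi>] by (simp add: mult.assoc)
next
  case (tsin c \<xi>) show ?case using trigf.tsin[of "a*c" \<xi>] by (simp add: mult.assoc)
next
  case (tadd f g) thus ?case using trigf.tadd[OF tadd.IH] by (simp add: distrib_left)
qed

lemma trigf_mult_cos: "trigf f \<Longrightarrow> trigf (\<lambda>w. cos (\<eta> \<bullet> w) * f w)"
proof (induction rule: trigf.induct)
  case (tcos c \<xi>)
  have "trigf (\<lambda>w. (c/2) * cos ((\<xi> - \<eta>) \<bullet> w) + (c/2) * cos ((\<xi> + \<eta>) \<bullet> w))"
    by (intro trigf.tadd trigf.tcos)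
  moreover have "(c/2) * cos ((\<xi> - \<eta>) \<bullet> w) + (c/2) * cos ((\<xi> + \<eta>) \<bullet> w) = cos (\<eta> \<bullet> w) * (c * cos (\<xi> \<bullet> w))" for w
    by (simp add: inner_diff_left inner_add_left cos_diff cos_add algebra_simps)
  ultimately show ?case by simp
next
  case (tsin c \<xi>)
  have "trigf (\<lambda>w. (c/2) * sin ((\<xi> - \<eta>) \<bullet> w) + (c/2) * sin ((\<xi> + \<eta>) \<bullet> w))"
    by (intro trigf.tadd trigf.tsin)
  moreover have "(c/2) * sin ((\<xi> - \<eta>) \<bullet> w) + (c/2) * sin ((\<xi> + \<eta>) \<bullet> w) = cos (\<eta> \<bullet> w) * (c * sin (\<xi> \<bullet> w))" for w
    by (simp add: inner_diff_left inner_add_left sin_diff sin_add algebra_simps)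
  ultimately show ?case by simp
next
  case (tadd f g) thus ?case using trigf.tadd[OF tadd.IH] by (simp add: distrib_left)
qed

lemma trigf_mult_sin: "trigf f \<Longrightarrow> trigf (\<lambda>w. sin (\<eta> \<bullet> w) * f w)"
proof (induction rule: trigf.induct)
  case (tcos c \<xi>)
  have "trigf (\<lambda>w. (-c/2) * sin ((\<xi> - \<eta>) \<bullet> w) + (c/2) * sin ((\<xi> + \<eta>) \<bullet> w))"
    by (intro trigf.tadd trigf.tsin)
  moreover have "(-c/2) * sin ((\<xi> - \<eta>) \<bullet> w) + (c/2) * sin ((\<xi> + \<eta>) \<bullet> w) = sin (\<eta> \<bullet> w) * (c * cos (\<xi> \<bullet> w))" for w
    by (simp add: inner_diff_left inner_add_left sin_diff sin_add algebra_simps)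
  ultimately show ?case by simp
next
  case (tsin c \<xi>)
  have "trigf (\<lambda>w. (c/2) * cos ((\<xi> - \<eta>) \<bullet> w) + (-c/2) * cos ((\<xi> + \<eta>) \<bullet> w))"
    by (intro trigf.tadd trigf.tcos)
  moreover have "(c/2) * cos ((\<xi> - \<eta>) \<bullet> w) + (-c/2) * cos ((\<xi> + \<eta>) \<bullet> w) = sin (\<eta> \<bullet> w) * (c * sin (\<xi> \<bullet> w))" for w
    by (simp add: inner_diff_left inner_add_left cos_diff cos_add algebra_simps)
  ultimately show ?case by simp
next
  case (tadd f g) thus ?case using trigf.tadd[OF tadd.IH] by (simp add: distrib_left)
qed

lemma trigf_mult: "trigf f \<Longrightarrow> trigf g \<Longrightarrow> trigf (\<lambda>w. f w * g w)"
proof (induction rule: trigf.induct)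
  case (tcos c \<xi>)
  have "trigf (\<lambda>w. c * (cos (\<xi> \<bullet> w) * g w))" by (intro trigf_cmult trigf_mult_cos tcos.prems)
  thus ?case by (simp add: mult.assoc)
next
  case (tsin c \<xi>)
  have "trigf (\<lambda>w. c * (sin (\<xi> \<bullet> w) * g w))" by (intro trigf_cmult trigf_mult_sin tsin.prems)
  thus ?case by (simp add: mult.assoc)
next
  case (tadd f1 f2) thus ?case using trigf.tadd[OF tadd.IH] by (simp add: distrib_right)
qed

lemma trigf_sum: "finite I \<Longrightarrow> (\<And>i. i \<in> I \<Longrightarrow> trigf (F i)) \<Longrightarrow> trigf (\<lambda>w. \<Sum>i\<in>I. F i w)"
proof (induction I rule: finite_induct)
  case empty show ?case using trigf_const[of 0] by simp
next
  case (insert x I) thus ?case using trigf.tadd[of "F x" "\<lambda>w. \<Sum>i\<in>I. F i w"] by simp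
qed

lemma trigf_poly: "real_polynomial_function q \<Longrightarrow> trigf r \<Longrightarrow> trigf (\<lambda>w. q (r w))"
proof (induction rule: real_polynomial_function.induct)
  case (linear f)
  then obtain c where "f = (\<lambda>x. x * c)" using real_bounded_linear by blast
  thus ?case using trigf_cmult[OF linear.prems, of c] by (simp add: mult.commute)
next
  case (const c) show ?case by (rule trigf_const)
next
  case (add f g) thus ?case by (intro trigf.tadd)
next
  case (mult f g) thus ?case by (intro trigf_mult)
qed

lemma trigf_bounded: "trigf f \<Longrightarrow> \<exists>B. \<forall>w. \<bar>f w\<bar> \<le> B"
proof (induction rule: trigf.induct)
  case (tcos c \<xi>)
  have "\<bar>c * cos (\<xi> \<bullet> w)\<bar> \<le> \<bar>c\<bar>" for w
    by (simp add: abs_mult mult_left_le)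
  thus ?case by blast
next
  case (tsin c \<xi>)
  have "\<bar>c * sin (\<xi> \<bullet> w)\<bar> \<le> \<bar>c\<bar>" for w
    by (simp add: abs_mult mult_left_le)
  thus ?case by blast
next
  case (tadd f g)
  then obtain B1 B2 where "\<forall>w. \<bar>f w\<bar> \<le> B1" "\<forall>w. \<bar>g w\<bar> \<le> B2" by blast
  hence "\<forall>w. \<bar>f w + g w\<bar> \<le> B1 + B2" by (meson abs_triangle_ineq add_mono order_trans)
  thus ?case by blast
qed

lemma trigf_meas: "trigf f \<Longrightarrow> f \<in> borel_measurable borel"
  by (induction rule: trigf.induct) auto

lemma trigf_integral:
  fixes \<psi> :: "'a::euclidean_space \<Rightarrow> real"
  assumes int: "integrable lborel \<psi>"
    and c: "\<And>\<xi>. (\<integral>w. \<psi> w * cos (\<xi> \<bullet> w) \<partial>lborel) = 0"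
    and s: "\<And>\<xi>. (\<integral>w. \<psi> w * sin (\<xi> \<bullet> w) \<partial>lborel) = 0"
  shows "trigf g \<Longrightarrow> integrable lborel (\<lambda>w. \<psi> w * g w) \<and> (\<integral>w. \<psi> w * g w \<partial>lborel) = 0"
proof (induction rule: trigf.induct)
  have m: "\<psi> \<in> borel_measurable borel" using borel_measurable_integrable[OF int] by simp
  case (tcos c' \<xi>)
  have i: "integrable lborel (\<lambda>w. \<psi> w * cos (\<xi> \<bullet> w))"
    by (rule Bochner_Integration.integrable_bound[OF int]) (use m in \<open>auto simp: abs_mult mult_left_le\<close>)
  have "(\<lambda>w. \<psi> w * (c' * cos (\<xi> \<bullet> w))) = (\<lambda>w. c' * (\<psi> w * cos (\<xi> \<bullet> w)))" by (auto simp: algebra_simps)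
  thus ?case using i c[of \<xi>] by simp
next
  case (tsin c' \<xi>)
  have m: "\<psi> \<in> borel_measurable borel" using borel_measurable_integrable[OF int] by simp
  have i: "integrable lborel (\<lambda>w. \<psi> w * sin (\<xi> \<bullet> w))"
    by (rule Bochner_Integration.integrable_bound[OF int]) (use m in \<open>auto simp: abs_mult mult_left_le\<close>)
  have "(\<lambda>w. \<psi> w * (c' * sin (\<xi> \<bullet> w))) = (\<lambda>w. c' * (\<psi> w * sin (\<xi> \<bullet> w)))" by (auto simp: algebra_simps)
  thus ?case using i s[of \<xi>] by simp
next
  case (tadd f g)
  thus ?case by (simp add: distrib_left)
qed


lemma ksin_lim: "(\<lambda>k::nat. real k * sin (x / real k)) \<longlonglongrightarrow> x"
proof -
  consider "x > 0" | "x < 0" | "x = 0" by linarith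
  thus ?thesis
  proof cases
    case 1 thus ?thesis by real_asymp
  next
    case 2 thus ?thesis by real_asymp
  next
    case 3 thus ?thesis by simp
  qed
qed

lemma trig_approx_zero:
  fixes \<psi> G :: "'a::euclidean_space \<Rightarrow> real"
  assumes int: "integrable lborel \<psi>"
    and c: "\<And>\<xi>. (\<integral>w. \<psi> w * cos (\<xi> \<bullet> w) \<partial>lborel) = 0"
    and s: "\<And>\<xi>. (\<integral>w. \<psi> w * sin (\<xi> \<bullet> w) \<partial>lborel) = 0"
    and Gm: "G \<in> borel_measurable borel"
    and Gb: "\<And>w. \<bar>G w\<bar> \<le> B"
    and app: "\<And>e. 0 < e \<Longrightarrow> \<exists>p. trigf p \<and> (\<forall>w. \<bar>G w - p w\<bar> \<le> e)"
  shows "(\<integral>w. \<psi> w * G w \<partial>lborel) = 0"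
proof -
  have m: "\<psi> \<in> borel_measurable borel" using borel_measurable_integrable[OF int] by simp
  have iG: "integrable lborel (\<lambda>w. \<psi> w * G w)"
    by (rule Bochner_Integration.integrable_bound[where f="\<lambda>w. B * \<psi> w"])
       (use int m Gm in \<open>auto simp: abs_mult intro!: AE_I2\<close>,
        metis Gb abs_ge_self mult.commute mult_left_mono abs_ge_zero order_trans)
  define A where "A = (\<integral>w. \<bar>\<psi> w\<bar> \<partial>lborel)"
  have A0: "0 \<le> A" unfolding A_def by simp
  have key: "\<bar>\<integral>w. \<psi> w * G w \<partial>lborel\<bar> \<le> e * A" if e: "0 < e" for e
  proof -
    obtain p where p: "trigf p" "\<And>w. \<bar>G w - p w\<bar> \<le> e" using app[OF e] by blast
    have ip: "integrable lborel (\<lambda>w. \<psi> w * p w)" and zp: "(\<integral>w. \<psi> w * p w \<partial>lborel) = 0"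
      using trigf_integral[OF int c s p(1)] by auto
    have "(\<integral>w. \<psi> w * G w \<partial>lborel) = (\<integral>w. \<psi> w * G w - \<psi> w * p w \<partial>lborel)"
      using zp iG ip by simp
    also have "\<bar>\<dots>\<bar> \<le> (\<integral>w. e * \<bar>\<psi> w\<bar> \<partial>lborel)"
    proof (rule integral_abs_bound_integral)
      show "integrable lborel (\<lambda>w. \<psi> w * G w - \<psi> w * p w)" using iG ip by simp
      show "integrable lborel (\<lambda>w. e * \<bar>\<psi> w\<bar>)" using int by simp
      show "\<bar>\<psi> w * G w - \<psi> w * p w\<bar> \<le> e * \<bar>\<psi> w\<bar>" for w
      proof -
        have "\<bar>\<psi> w * G w - \<psi> w * p w\<bar> = \<bar>\<psi> w\<bar> * \<bar>G w - p w\<bar>"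
          by (subst abs_mult[symmetric], simp add: right_diff_distrib)
        also have "\<dots> \<le> \<bar>\<psi> w\<bar> * e" by (rule mult_left_mono[OF p(2)]) simp
        finally show ?thesis by (simp add: mult.commute)
      qed
    qed
    also have "\<dots> = e * A" unfolding A_def by simp
    finally show ?thesis .
  qed
  show ?thesis
  proof (rule ccontr)
    assume ne: "(\<integral>w. \<psi> w * G w \<partial>lborel) \<noteq> 0"
    define e where "e = \<bar>\<integral>w. \<psi> w * G w \<partial>lborel\<bar> / (2 * (A + 1))"
    have e0: "0 < e" unfolding e_def using ne A0 by auto
    have "\<bar>\<integral>w. \<psi> w * G w \<partial>lborel\<bar> \<le> e * A" by (rule key[OF e0])
    moreover have "e * A < \<bar>\<integral>w. \<psi> w * G w \<partial>lborel\<bar>"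
    proof -
      let ?I = "\<bar>\<integral>w. \<psi> w * G w \<partial>lborel\<bar>"
      have "e * A = ?I * (A / (2 * (A + 1)))" unfolding e_def by (simp add: field_simps)
      also have "\<dots> < ?I * 1"
        by (rule mult_strict_left_mono) (use A0 ne in \<open>auto simp: field_simps\<close>)
      finally show ?thesis by simp
    qed
    ultimately show False by simp
  qed
qed


lemma sq_sum_basis: "(\<Sum>b\<in>Basis. (w \<bullet> b)\<^sup>2) = (norm (w::'a::euclidean_space))\<^sup>2"
proof -
  have "(norm w)\<^sup>2 = w \<bullet> w" by (rule power2_norm_eq_inner)
  also have "\<dots> = (\<Sum>b\<in>Basis. (w \<bullet> b) * (w \<bullet> b))" by (rule euclidean_inner)
  finally show ?thesis by (simp add: power2_eq_square)
qed

lemma odd_ball_moment_zero: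
  fixes \<psi> :: "'a::euclidean_space \<Rightarrow> real"
  assumes int: "integrable lborel \<psi>"
    and c: "\<And>\<xi>. (\<integral>w. \<psi> w * cos (\<xi> \<bullet> w) \<partial>lborel) = 0"
    and s: "\<And>\<xi>. (\<integral>w. \<psi> w * sin (\<xi> \<bullet> w) \<partial>lborel) = 0"
    and R: "0 < R"
  shows "(\<integral>w. \<psi> w * ((u \<bullet> w) * indicator (cball 0 R) w) \<partial>lborel) = 0"
proof -
  define snb where "snb k b w = real k * sin (((1 / real k) *\<^sub>R b) \<bullet> w)" for k :: nat and b w :: 'a
  define S where "S k w = (\<Sum>b\<in>Basis. (u \<bullet> b) * snb k b w)" for k w
  define Q where "Q k w = (\<Sum>b\<in>Basis. (snb k b w)\<^sup>2)" for k w
  define \<theta> where "\<theta> k r = max 0 (min 1 (1 - real k * (r - R\<^sup>2)))" for k :: nat and r :: real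
  define G where "G k w = S k w * \<theta> k (Q k w)" for k w
  define U where "U = (\<Sum>b\<in>Basis. \<bar>u \<bullet> b\<bar>)"
  have U0: "0 \<le> U" unfolding U_def by (simp add: sum_nonneg)
  have m: "\<psi> \<in> borel_measurable borel" using borel_measurable_integrable[OF int] by simp
  have snb_eq: "snb k b w = real k * sin ((w \<bullet> b) / real k)" for k b w
    unfolding snb_def by (simp add: inner_commute divide_inverse mult.commute)
  have snb_t: "trigf (snb k b)" for k b unfolding snb_def by (rule tsin)
  have S_t: "trigf (S k)" for k unfolding S_def
    by (rule trigf_sum) (auto intro: trigf_cmult snb_t)
  have Q_t: "trigf (Q k)" for k unfolding Q_def
    by (rule trigf_sum) (auto simp: power2_eq_square intro: trigf_mult snb_t)
  have snb_bd: "\<bar>snb k b w\<bar> \<le> real k" for k b w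
    unfolding snb_def by (simp add: abs_mult mult_left_le)
  have snb_le: "\<bar>snb k b w\<bar> \<le> \<bar>w \<bullet> b\<bar>" for k b w
  proof (cases "k = 0")
    case True thus ?thesis by (simp add: snb_def)
  next
    case False
    have "\<bar>snb k b w\<bar> = real k * \<bar>sin ((w \<bullet> b) / real k)\<bar>" by (simp add: snb_eq abs_mult)
    also have "\<dots> \<le> real k * \<bar>(w \<bullet> b) / real k\<bar>" by (intro mult_left_mono abs_sin_x_le_abs_x) auto
    also have "\<dots> = \<bar>w \<bullet> b\<bar>" using False by simp
    finally show ?thesis .
  qed
  have Q0: "0 \<le> Q k w" for k w unfolding Q_def by (simp add: sum_nonneg)
  have Qb: "Q k w \<le> real DIM('a) * (real k)\<^sup>2" for k w
  proof -
    have "Q k w \<le> (\<Sum>b\<in>(Basis::'a set). (real k)\<^sup>2)" unfolding Q_def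
      by (intro sum_mono) (metis abs_le_square_iff abs_of_nat snb_bd)
    thus ?thesis by simp
  qed
  have Qle: "Q k w \<le> (norm w)\<^sup>2" for k w
  proof -
    have "Q k w \<le> (\<Sum>b\<in>(Basis::'a set). (w \<bullet> b)\<^sup>2)" unfolding Q_def
      by (intro sum_mono) (metis abs_le_square_iff snb_le)
    thus ?thesis by (simp add: sq_sum_basis)
  qed
  have Sb: "\<bar>S k w\<bar> \<le> real k * U" for k w
  proof -
    have "\<bar>S k w\<bar> \<le> (\<Sum>b\<in>Basis. \<bar>(u \<bullet> b) * snb k b w\<bar>)" unfolding S_def by (rule sum_abs)
    also have "\<dots> \<le> (\<Sum>b\<in>Basis. \<bar>u \<bullet> b\<bar> * real k)"
      by (intro sum_mono) (simp add: abs_mult mult_left_mono snb_bd)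
    finally show ?thesis by (simp add: U_def sum_distrib_left mult.commute)
  qed
  have \<theta>01: "0 \<le> \<theta> k r" "\<theta> k r \<le> 1" for k r unfolding \<theta>_def by auto
  have \<theta>cont: "continuous_on {0..real DIM('a) * (real k)\<^sup>2} (\<theta> k)" for k
    unfolding \<theta>_def by (intro continuous_intros)
  have Gm: "G k \<in> borel_measurable borel" for k
    proof -
    have th: "\<theta> k \<in> borel_measurable borel" unfolding \<theta>_def by measurable
    have "(\<lambda>w. \<theta> k (Q k w)) \<in> borel_measurable borel"
      by (rule measurable_compose[OF trigf_meas[OF Q_t] th])
    thus ?thesis unfolding G_def by (rule borel_measurable_times[OF trigf_meas[OF S_t]])
  qed
  have Gdom: "\<bar>G k w\<bar> \<le> U * (R + 1)" for k w
  proof (cases "\<theta> k (Q k w) = 0")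
    case True thus ?thesis using U0 R by (simp add: G_def)
  next
    case False
    have QR: "Q k w \<le> R\<^sup>2 + 1"
    proof (cases "k = 0")
      case True thus ?thesis by (simp add: Q_def snb_def)
    next
      case k: False
      from False have "1 - real k * (Q k w - R\<^sup>2) > 0" unfolding \<theta>_def by (auto simp: max_def min_def split: if_splits)
      hence "real k * (Q k w - R\<^sup>2) < 1" by simp
      moreover have "real k \<ge> 1" using k by simp
      ultimately show ?thesis
        by (smt (verit, best) mult_le_cancel_right1 mult.commute)
    qed
    have sb: "\<bar>snb k b w\<bar> \<le> R + 1" if "b \<in> Basis" for b
    proof -
      have "(snb k b w)\<^sup>2 \<le> Q k w" unfolding Q_def
        by (rule member_le_sum) (use that in auto)
      also have "\<dots> \<le> (R + 1)\<^sup>2" using QR R by (simp add: power2_eq_square algebra_simps)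
      finally show ?thesis using R by (metis abs_le_square_iff abs_of_pos add_pos_pos zero_less_one)
    qed
    have "\<bar>S k w\<bar> \<le> (\<Sum>b\<in>Basis. \<bar>(u \<bullet> b) * snb k b w\<bar>)" unfolding S_def by (rule sum_abs)
    also have "\<dots> \<le> (\<Sum>b\<in>Basis. \<bar>u \<bullet> b\<bar> * (R + 1))"
      by (intro sum_mono) (simp add: abs_mult mult_left_mono sb)
    finally have "\<bar>S k w\<bar> \<le> U * (R + 1)" by (simp add: U_def sum_distrib_right)
    moreover have "\<bar>\<theta> k (Q k w)\<bar> \<le> 1" using \<theta>01 by (simp add: abs_le_iff)
    ultimately have "\<bar>S k w\<bar> * \<bar>\<theta> k (Q k w)\<bar> \<le> U * (R + 1) * 1"
      by (intro mult_mono) (use U0 R in auto)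
    thus ?thesis by (simp add: G_def abs_mult)
  qed
  have Gz: "(\<integral>w. \<psi> w * G k w \<partial>lborel) = 0" for k
  proof (rule trig_approx_zero[OF int c s Gm[of k] Gdom[of k]])
    fix e :: real assume e: "0 < e"
    define e' where "e' = e / (real k * U + 1)"
    have kU: "0 \<le> real k * U" using U0 by simp
    have e': "0 < e'" unfolding e'_def using e kU by simp
    obtain q where q: "real_polynomial_function q"
      "\<And>r. r \<in> {0..real DIM('a) * (real k)\<^sup>2} \<Longrightarrow> \<bar>\<theta> k r - q r\<bar> < e'"
      using Stone_Weierstrass_real_polynomial_function[OF compact_Icc \<theta>cont e'] by blast
    have ee: "(real k * U) * e' \<le> e"
    proof -
      have "(real k * U) * e' \<le> (real k * U + 1) * e'" using e' by (intro mult_right_mono) auto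
      also have "(real k * U + 1) * e' = e" unfolding e'_def using kU by (simp add: field_simps)
      finally show ?thesis .
    qed
    have bd: "\<bar>G k w - S k w * q (Q k w)\<bar> \<le> e" for w
    proof -
      have "\<bar>G k w - S k w * q (Q k w)\<bar> = \<bar>S k w\<bar> * \<bar>\<theta> k (Q k w) - q (Q k w)\<bar>"
        unfolding G_def by (subst abs_mult[symmetric], simp add: right_diff_distrib)
      also have "\<dots> \<le> (real k * U) * e'"
      proof (rule mult_mono)
        show "\<bar>S k w\<bar> \<le> real k * U" by (rule Sb)
        have "Q k w \<in> {0..real DIM('a) * (real k)\<^sup>2}" using Q0[of k w] Qb[of k w] by simp
        thus "\<bar>\<theta> k (Q k w) - q (Q k w)\<bar> \<le> e'" using q(2) less_imp_le by blast
        show "0 \<le> real k * U" by (rule kU)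
        show "0 \<le> \<bar>\<theta> k (Q k w) - q (Q k w)\<bar>" by simp
      qed
      also have "\<dots> \<le> e" by (rule ee)
      finally show ?thesis .
    qed
    have "trigf (\<lambda>w. S k w * q (Q k w))" by (rule trigf_mult[OF S_t trigf_poly[OF q(1) Q_t]])
    thus "\<exists>p. trigf p \<and> (\<forall>w. \<bar>G k w - p w\<bar> \<le> e)" using bd by blast
  qed
  have Glim: "(\<lambda>k. G k w) \<longlonglongrightarrow> (u \<bullet> w) * indicator (cball 0 R) w" for w
  proof -
    have snl: "(\<lambda>k. snb k b w) \<longlonglongrightarrow> w \<bullet> b" for b
      unfolding snb_eq by (rule ksin_lim)
    have "(\<lambda>k. S k w) \<longlonglongrightarrow> (\<Sum>b\<in>Basis. (u \<bullet> b) * (w \<bullet> b))"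
      unfolding S_def by (intro tendsto_intros snl)
    hence Sl: "(\<lambda>k. S k w) \<longlonglongrightarrow> u \<bullet> w" by (simp add: euclidean_inner[of u w])
    have "(\<lambda>k. Q k w) \<longlonglongrightarrow> (\<Sum>b\<in>Basis. (w \<bullet> b)\<^sup>2)"
      unfolding Q_def by (intro tendsto_intros snl)
    hence Ql: "(\<lambda>k. Q k w) \<longlonglongrightarrow> (norm w)\<^sup>2" by (simp add: sq_sum_basis)
    have Tl: "(\<lambda>k. \<theta> k (Q k w)) \<longlonglongrightarrow> indicator (cball 0 R) w"
    proof (cases "norm w \<le> R")
      case True
      have "\<theta> k (Q k w) = 1" for k
      proof -
        have "Q k w \<le> R\<^sup>2" using Qle[of k w] True by (smt (verit) norm_ge_zero power_mono)
        hence "real k * (Q k w - R\<^sup>2) \<le> 0" by (simp add: mult_nonneg_nonpos)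
        thus ?thesis unfolding \<theta>_def by simp
      qed
      thus ?thesis using True by (simp add: indicator_def)
    next
      case False
      define \<delta> where "\<delta> = ((norm w)\<^sup>2 - R\<^sup>2) / 2"
      have d0: "0 < \<delta>" unfolding \<delta>_def using False R by (simp add: power_strict_mono)
      have "R\<^sup>2 + \<delta> < (norm w)\<^sup>2" using d0 unfolding \<delta>_def by (simp add: field_simps)
      hence ev1: "eventually (\<lambda>k. Q k w > R\<^sup>2 + \<delta>) sequentially"
        by (rule order_tendstoD(1)[OF Ql])
      obtain K :: nat where K: "1 / \<delta> < real K" using reals_Archimedean2 by blast
      have ev2: "eventually (\<lambda>k. real k * \<delta> > 1) sequentially"
      proof (rule eventually_sequentiallyI[of K])
        fix k assume "K \<le> k"
        hence "1 / \<delta> < real k" using K by linarith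
        thus "real k * \<delta> > 1" using d0 by (simp add: field_simps)
      qed
      have "eventually (\<lambda>k. \<theta> k (Q k w) = 0) sequentially"
        using ev1 ev2
      proof eventually_elim
        case (elim k)
        have "real k * (Q k w - R\<^sup>2) \<ge> real k * \<delta>" using elim(1) by (intro mult_left_mono) auto
        thus ?case unfolding \<theta>_def using elim(2) by simp
      qed
      moreover have "indicator (cball 0 R) w = (0::real)" using False by simp
      ultimately show ?thesis by (simp add: tendsto_eventually)
    qed
    show ?thesis unfolding G_def by (intro tendsto_mult Sl Tl)
  qed
  have "(\<lambda>k. \<integral>w. \<psi> w * G k w \<partial>lborel) \<longlonglongrightarrow> (\<integral>w. \<psi> w * ((u \<bullet> w) * indicator (cball 0 R) w) \<partial>lborel)"
  proof (rule integral_dominated_convergence[where w="\<lambda>w. \<bar>\<psi> w\<bar> * (U * (R + 1))"])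
    have cs: "cball 0 R \<in> sets borel" by (simp add: borel_closed)
    have "(\<lambda>w. \<psi> w * ((u \<bullet> w) * indicator (cball 0 R) w)) \<in> borel_measurable borel"
      using m borel_measurable_indicator[OF cs] by (intro borel_measurable_times) auto
    thus "(\<lambda>w. \<psi> w * ((u \<bullet> w) * indicator (cball 0 R) w)) \<in> borel_measurable lborel" by simp
    show "(\<lambda>w. \<psi> w * G k w) \<in> borel_measurable lborel" for k using m Gm[of k] by measurable
    show "integrable lborel (\<lambda>w. \<bar>\<psi> w\<bar> * (U * (R + 1)))" using int by simp
    show "AE w in lborel. (\<lambda>k. \<psi> w * G k w) \<longlonglongrightarrow> \<psi> w * ((u \<bullet> w) * indicator (cball 0 R) w)"
      by (intro AE_I2 tendsto_mult tendsto_const Glim)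
    show "AE w in lborel. norm (\<psi> w * G k w) \<le> \<bar>\<psi> w\<bar> * (U * (R + 1))" for k
      by (intro AE_I2) (simp add: abs_mult mult_left_mono Gdom)
  qed
  thus ?thesis using Gz by (simp add: LIMSEQ_const_iff)
qed


lemma lborel_distr_uminus_eucl: "distr lborel borel uminus = (lborel :: 'a::euclidean_space measure)"
proof -
  have "(lborel :: 'a measure) = density (distr lborel borel (\<lambda>x. 0 + (-1::real) *\<^sub>R x)) (\<lambda>x. ennreal (\<bar>-1::real\<bar> ^ DIM('a)))"
    by (rule lborel_affine) simp
  also have "\<dots> = distr lborel borel uminus" by (simp add: density_1)
  finally show ?thesis ..
qed

lemma lborel_neg_integral:
  fixes f :: "'a::euclidean_space \<Rightarrow> real"
  assumes "f \<in> borel_measurable borel"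
  shows "integrable lborel (\<lambda>w. f (- w)) = integrable lborel f"
    and "(\<integral>w. f (- w) \<partial>lborel) = (\<integral>w. f w \<partial>lborel)"
proof -
  have um: "uminus \<in> measurable lborel (borel :: 'a measure)" by simp
  show "integrable lborel (\<lambda>w. f (- w)) = integrable lborel f"
    using integrable_distr_eq[OF um assms] by (simp add: lborel_distr_uminus_eucl)
  show "(\<integral>w. f (- w) \<partial>lborel) = (\<integral>w. f w \<partial>lborel)"
    using integral_distr[OF um assms] by (simp add: lborel_distr_uminus_eucl)
qed

lemma fhk_basic:
  assumes "frac_heat_kernel s t phi"
  shows "integrable lborel phi" "phi \<in> borel_measurable borel" "\<And>w. 0 \<le> phi w"
    "(\<integral>w. phi w \<partial>lborel) = 1"
  using assms unfolding frac_heat_kernel_def by auto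

lemma fhk_cos_sin:
  fixes phi :: "'a::euclidean_space \<Rightarrow> real"
  assumes "frac_heat_kernel s t phi"
  shows "(\<integral>w. phi w * cos (\<xi> \<bullet> w) \<partial>lborel) = exp (- (t * norm \<xi> powr (2 * s)))"
    and "(\<integral>w. phi w * sin (\<xi> \<bullet> w) \<partial>lborel) = 0"
proof -
  let ?F = "\<lambda>w. complex_of_real (phi w) * cis (- (\<xi> \<bullet> w))"
  have i: "integrable lborel ?F"
    and v: "(\<integral>w. ?F w \<partial>lborel) = complex_of_real (exp (- (t * norm \<xi> powr (2 * s))))"
    using assms unfolding frac_heat_kernel_def by auto
  have "(\<integral>w. Re (?F w) \<partial>lborel) = Re (\<integral>w. ?F w \<partial>lborel)" by (rule integral_Re[OF i])
  thus "(\<integral>w. phi w * cos (\<xi> \<bullet> w) \<partial>lborel) = exp (- (t * norm \<xi> powr (2 * s)))"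
    using v by (simp add: cis.sel)
  have "(\<integral>w. Im (?F w) \<partial>lborel) = Im (\<integral>w. ?F w \<partial>lborel)" by (rule integral_Im[OF i])
  hence "(\<integral>w. - (phi w * sin (\<xi> \<bullet> w)) \<partial>lborel) = 0"
    using v by (simp add: cis.sel)
  thus "(\<integral>w. phi w * sin (\<xi> \<bullet> w) \<partial>lborel) = 0" by simp
qed

lemma fhk_odd_moment:
  fixes phi :: "'a::euclidean_space \<Rightarrow> real"
  assumes fhk: "frac_heat_kernel s t phi" and R: "0 < R"
  shows "(\<integral>w. phi w * ((u \<bullet> w) * indicator (cball 0 R) w) \<partial>lborel) = 0"
proof -
  note b = fhk_basic[OF fhk]
  define \<psi> where "\<psi> w = phi w - phi (- w)" for w
  have pn: "integrable lborel (\<lambda>w. phi (- w))" using lborel_neg_integral(1)[OF b(2)] b(1) by simp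
  have ip: "integrable lborel \<psi>" unfolding \<psi>_def using b(1) pn by simp
  have bt: "(\<lambda>w. phi w * T w) \<in> borel_measurable borel" if "T \<in> borel_measurable borel" for T :: "'a \<Rightarrow> real"
    using b(2) that by (rule borel_measurable_times)
  have intb: "integrable lborel (\<lambda>w. g w * T w)" if "integrable lborel g" "T \<in> borel_measurable borel" "\<And>w. \<bar>T w\<bar> \<le> B"
    for g T and B :: real
    by (rule Bochner_Integration.integrable_bound[where f="\<lambda>w. B * g w"])
      (use that in \<open>auto simp: abs_mult intro!: AE_I2 borel_measurable_times,
        metis abs_ge_self mult.commute mult_left_mono abs_ge_zero order_trans\<close>)
  have cs: "\<And>\<xi>. (\<integral>w. \<psi> w * cos (\<xi> \<bullet> w) \<partial>lborel) = 0"
  proof -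
    fix \<xi> :: 'a
    have i1: "integrable lborel (\<lambda>w. phi w * cos (\<xi> \<bullet> w))" by (rule intb[OF b(1), of _ 1]) auto
    have i2: "integrable lborel (\<lambda>w. phi (- w) * cos (\<xi> \<bullet> w))" by (rule intb[OF pn, of _ 1]) auto
    have "(\<integral>w. phi (- w) * cos (\<xi> \<bullet> w) \<partial>lborel) = (\<integral>w. phi (- w) * cos (\<xi> \<bullet> (- (- w))) \<partial>lborel)" by simp
    also have "\<dots> = (\<integral>w. phi w * cos (\<xi> \<bullet> (- w)) \<partial>lborel)"
      by (rule lborel_neg_integral(2)[where f="\<lambda>w. phi w * cos (\<xi> \<bullet> (- w))"]) (intro bt, simp)
    also have "\<dots> = (\<integral>w. phi w * cos (\<xi> \<bullet> w) \<partial>lborel)" by simp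
    finally show "(\<integral>w. \<psi> w * cos (\<xi> \<bullet> w) \<partial>lborel) = 0"
      unfolding \<psi>_def using i1 i2 by (simp add: left_diff_distrib)
  qed
  have sn: "\<And>\<xi>. (\<integral>w. \<psi> w * sin (\<xi> \<bullet> w) \<partial>lborel) = 0"
  proof -
    fix \<xi> :: 'a
    have i1: "integrable lborel (\<lambda>w. phi w * sin (\<xi> \<bullet> w))" by (rule intb[OF b(1), of _ 1]) auto
    have i2: "integrable lborel (\<lambda>w. phi (- w) * sin (\<xi> \<bullet> w))" by (rule intb[OF pn, of _ 1]) auto
    have "(\<integral>w. phi (- w) * sin (\<xi> \<bullet> w) \<partial>lborel) = (\<integral>w. phi (- w) * sin (\<xi> \<bullet> (- (- w))) \<partial>lborel)" by simp
    also have "\<dots> = (\<integral>w. phi w * sin (\<xi> \<bullet> (- w)) \<partial>lborel)"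
      by (rule lborel_neg_integral(2)[where f="\<lambda>w. phi w * sin (\<xi> \<bullet> (- w))"]) (intro bt, simp)
    also have "\<dots> = - (\<integral>w. phi w * sin (\<xi> \<bullet> w) \<partial>lborel)" by simp
    also have "\<dots> = 0" using fhk_cos_sin(2)[OF fhk] by simp
    finally show "(\<integral>w. \<psi> w * sin (\<xi> \<bullet> w) \<partial>lborel) = 0"
      unfolding \<psi>_def using i1 i2 fhk_cos_sin(2)[OF fhk] by (simp add: left_diff_distrib)
  qed
  define G where "G w = (u \<bullet> w) * indicator (cball 0 R) w" for w :: 'a
  have csb: "cball 0 R \<in> sets borel" by (simp add: borel_closed)
  have Gm: "G \<in> borel_measurable borel" unfolding G_def
    using borel_measurable_indicator[OF csb] by (intro borel_measurable_times) auto
  have Gb: "\<bar>G w\<bar> \<le> norm u * R" for w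
  proof (cases "w \<in> cball 0 R")
    case True
    hence "\<bar>u \<bullet> w\<bar> \<le> norm u * R" using Cauchy_Schwarz_ineq2[of u w] R
      by (smt (verit) mem_cball_0 mult_left_mono norm_ge_zero)
    thus ?thesis using True by (simp add: G_def)
  next
    case False thus ?thesis using R by (simp add: G_def)
  qed
  have Gneg: "G (- w) = - G w" for w unfolding G_def by (simp add: indicator_def)
  have z: "(\<integral>w. \<psi> w * G w \<partial>lborel) = 0"
    using odd_ball_moment_zero[OF ip cs sn R, of u] unfolding G_def .
  have i1: "integrable lborel (\<lambda>w. phi w * G w)" by (rule intb[OF b(1) Gm Gb])
  have i2: "integrable lborel (\<lambda>w. phi (- w) * G w)" by (rule intb[OF pn Gm Gb])
  have "(\<integral>w. phi (- w) * G w \<partial>lborel) = (\<integral>w. phi (- w) * G (- (- w)) \<partial>lborel)" by simp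
  also have "\<dots> = (\<integral>w. phi w * G (- w) \<partial>lborel)"
    by (rule lborel_neg_integral(2)[where f="\<lambda>w. phi w * G (- w)"]) (intro bt, use Gm in simp)
  also have "\<dots> = - (\<integral>w. phi w * G w \<partial>lborel)" by (simp add: Gneg)
  finally have "(\<integral>w. \<psi> w * G w \<partial>lborel) = 2 * (\<integral>w. phi w * G w \<partial>lborel)"
    unfolding \<psi>_def using i1 i2 by (simp add: left_diff_distrib)
  thus ?thesis using z unfolding G_def by simp
qed

lemma sin_ge_half: assumes "0 \<le> x" "x \<le> 1" shows "x / 2 \<le> sin (x::real)"
proof -
  have "(\<lambda>y. sin y - y / 2) 0 \<le> (\<lambda>y. sin y - y / 2) x"
  proof (rule DERIV_nonneg_imp_nondecreasing[OF assms(1)])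
    fix y assume y1: "0 \<le> y" and y2: "y \<le> x"
    note y = y1 y2
    show "\<exists>d. ((\<lambda>y. sin y - y / 2) has_real_derivative d) (at y) \<and> 0 \<le> d"
    proof (intro exI conjI)
      show "((\<lambda>y. sin y - y / 2) has_real_derivative (cos y - 1/2)) (at y)"
        by (auto intro!: derivative_eq_intros)
      have "1 \<le> pi / 3" using pi_gt3 by simp
      hence "cos (pi / 3) \<le> cos y"
        using y assms by (intro cos_monotone_0_pi_le) auto
      thus "0 \<le> cos y - 1/2" by (simp add: cos_60)
    qed
  qed
  thus ?thesis by simp
qed

lemma one_minus_cos_ge: assumes "\<bar>x\<bar> \<le> 2" shows "x\<^sup>2 \<le> 8 * (1 - cos (x::real))"
proof -
  define y where "y = \<bar>x\<bar> / 2"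
  have y: "0 \<le> y" "y \<le> 1" using assms unfolding y_def by auto
  have "1 - cos x = 1 - cos (2 * y)" unfolding y_def by (cases "x \<ge> 0") auto
  also have "\<dots> = 2 * (sin y)\<^sup>2" by (simp add: cos_double_sin)
  finally have e: "1 - cos x = 2 * (sin y)\<^sup>2" .
  have "y / 2 \<le> sin y" by (rule sin_ge_half[OF y])
  hence "(y/2)\<^sup>2 \<le> (sin y)\<^sup>2" using y by (intro power_mono) auto
  moreover have "x\<^sup>2 = 4 * y\<^sup>2" unfolding y_def by (simp add: power2_eq_square)
  ultimately show ?thesis using e by (simp add: power2_eq_square)
qed

lemma fhk_second_moment:
  fixes phi :: "'a::euclidean_space \<Rightarrow> real"
  assumes fhk: "frac_heat_kernel s t phi" and R: "0 < R" and t: "0 \<le> t"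
  shows "(\<integral>w. indicator (cball 0 R) w * phi w * (norm w)\<^sup>2 \<partial>lborel) \<le> 8 * real DIM('a) * t * R powr (2 - 2 * s)"
proof -
  note b = fhk_basic[OF fhk]
  define H where "H w = (\<Sum>b\<in>(Basis::'a set). 8 * R\<^sup>2 * (1 - cos (((1 / R) *\<^sub>R b) \<bullet> w)))" for w
  have csb: "cball 0 R \<in> sets borel" by (simp add: borel_closed)
  have pt: "indicator (cball 0 R) w * (norm w)\<^sup>2 \<le> H w" for w
  proof (cases "w \<in> cball 0 R")
    case True
    have "(norm w)\<^sup>2 = (\<Sum>b\<in>(Basis::'a set). (w \<bullet> b)\<^sup>2)" by (simp add: sq_sum_basis)
    also have "\<dots> \<le> H w" unfolding H_def
    proof (rule sum_mono)
      fix b :: 'a assume bB: "b \<in> Basis"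
      have e: "((1 / R) *\<^sub>R b) \<bullet> w = (w \<bullet> b) / R" by (simp add: inner_commute)
      have "\<bar>w \<bullet> b\<bar> \<le> norm w" using bB by (simp add: Basis_le_norm)
      also have "\<dots> \<le> R" using True by simp
      finally have "\<bar>w \<bullet> b\<bar> / R \<le> 1" using R by simp
      moreover have "\<bar>(w \<bullet> b) / R\<bar> = \<bar>w \<bullet> b\<bar> / R" using R by (simp add: abs_div)
      ultimately have "\<bar>(w \<bullet> b) / R\<bar> \<le> 2" by linarith
      hence "((w \<bullet> b) / R)\<^sup>2 \<le> 8 * (1 - cos ((w \<bullet> b) / R))" by (rule one_minus_cos_ge)
      hence "R\<^sup>2 * ((w \<bullet> b) / R)\<^sup>2 \<le> R\<^sup>2 * (8 * (1 - cos ((w \<bullet> b) / R)))"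
        by (intro mult_left_mono) auto
      thus "(w \<bullet> b)\<^sup>2 \<le> 8 * R\<^sup>2 * (1 - cos (((1 / R) *\<^sub>R b) \<bullet> w))"
        using R by (simp add: e power_divide algebra_simps inner_commute)
    qed
    finally show ?thesis using True by simp
  next
    case False
    have "0 \<le> H w" unfolding H_def by (intro sum_nonneg) auto
    thus ?thesis using False by simp
  qed
  have Hm: "H \<in> borel_measurable borel" unfolding H_def by measurable
  have Hb: "\<bar>H w\<bar> \<le> real DIM('a) * (16 * R\<^sup>2)" for w
  proof -
    have "\<bar>H w\<bar> \<le> (\<Sum>b\<in>(Basis::'a set). \<bar>8 * R\<^sup>2 * (1 - cos (((1 / R) *\<^sub>R b) \<bullet> w))\<bar>)"
      unfolding H_def by (rule sum_abs)
    also have "\<dots> \<le> (\<Sum>b\<in>(Basis::'a set). 16 * R\<^sup>2)"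
    proof (rule sum_mono)
      fix b :: 'a
      define c where "c = 1 - cos (((1 / R) *\<^sub>R b) \<bullet> w)"
      have c: "0 \<le> c" "c \<le> 2" unfolding c_def
        using cos_ge_minus_one[of "((1 / R) *\<^sub>R b) \<bullet> w"] cos_le_one[of "((1 / R) *\<^sub>R b) \<bullet> w"] by auto
      have "8 * R\<^sup>2 * c \<le> 8 * R\<^sup>2 * 2" by (rule mult_left_mono[OF c(2)]) simp
      moreover have "0 \<le> 8 * R\<^sup>2 * c" using c by simp
      ultimately show "\<bar>8 * R\<^sup>2 * (1 - cos (((1 / R) *\<^sub>R b) \<bullet> w))\<bar> \<le> 16 * R\<^sup>2"
        unfolding c_def[symmetric] by simp
    qed
    finally show ?thesis by simp
  qed
  have intb: "integrable lborel (\<lambda>w. phi w * T w)" if "T \<in> borel_measurable borel" "\<And>w. \<bar>T w\<bar> \<le> B"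
    for T and B :: real
    by (rule Bochner_Integration.integrable_bound[where f="\<lambda>w. B * phi w"])
      (use that b in \<open>auto simp: abs_mult intro!: AE_I2 borel_measurable_times,
        metis abs_ge_self mult.commute mult_left_mono abs_ge_zero order_trans\<close>)
  have i1: "integrable lborel (\<lambda>w. phi w * (indicator (cball 0 R) w * (norm w)\<^sup>2))"
  proof (rule intb)
    show "(\<lambda>w. indicator (cball 0 R) w * (norm w)\<^sup>2) \<in> borel_measurable borel"
      using borel_measurable_indicator[OF csb] by (intro borel_measurable_times) auto
    show "\<bar>indicator (cball 0 R) w * (norm w)\<^sup>2\<bar> \<le> R\<^sup>2" for w
      using R by (cases "w \<in> cball 0 R") (auto simp: power_mono)
  qed
  have i2: "integrable lborel (\<lambda>w. phi w * H w)" by (rule intb[OF Hm Hb])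
  have icos: "integrable lborel (\<lambda>w. phi w * cos (\<xi> \<bullet> w))" for \<xi> :: 'a
    by (rule intb[of _ 1]) auto
  have "(\<integral>w. indicator (cball 0 R) w * phi w * (norm w)\<^sup>2 \<partial>lborel)
      = (\<integral>w. phi w * (indicator (cball 0 R) w * (norm w)\<^sup>2) \<partial>lborel)"
    by (simp add: mult_ac)
  also have "\<dots> \<le> (\<integral>w. phi w * H w \<partial>lborel)"
    by (rule integral_mono[OF i1 i2]) (use b(3) pt in \<open>simp add: mult_left_mono\<close>)
  also have "\<dots> = (\<Sum>b\<in>(Basis::'a set). 8 * R\<^sup>2 * ((\<integral>w. phi w \<partial>lborel) - (\<integral>w. phi w * cos (((1 / R) *\<^sub>R b) \<bullet> w) \<partial>lborel)))"
  proof -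
    have "(\<integral>w. phi w * H w \<partial>lborel) = (\<integral>w. (\<Sum>b\<in>(Basis::'a set). phi w * (8 * R\<^sup>2 * (1 - cos (((1 / R) *\<^sub>R b) \<bullet> w)))) \<partial>lborel)"
      unfolding H_def by (simp add: sum_distrib_left)
    also have "\<dots> = (\<Sum>b\<in>(Basis::'a set). (\<integral>w. phi w * (8 * R\<^sup>2 * (1 - cos (((1 / R) *\<^sub>R b) \<bullet> w))) \<partial>lborel))"
    proof (rule Bochner_Integration.integral_sum[where f="\<lambda>b w. phi w * (8 * R\<^sup>2 * (1 - cos (((1 / R) *\<^sub>R b) \<bullet> w)))"])
      fix b :: 'a
      have i: "integrable lborel (\<lambda>w. 8 * R\<^sup>2 * (phi w - phi w * cos (((1 / R) *\<^sub>R b) \<bullet> w)))"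
        using b(1) icos[of "(1 / R) *\<^sub>R b"] by (intro integrable_mult_right Bochner_Integration.integrable_diff)
      have eq: "(\<lambda>w. 8 * R\<^sup>2 * (phi w - phi w * cos (((1 / R) *\<^sub>R b) \<bullet> w))) = (\<lambda>w. phi w * (8 * R\<^sup>2 * (1 - cos (((1 / R) *\<^sub>R b) \<bullet> w))))"
        by (auto simp: algebra_simps)
      show "integrable lborel (\<lambda>w. phi w * (8 * R\<^sup>2 * (1 - cos (((1 / R) *\<^sub>R b) \<bullet> w))))" using i unfolding eq .
    qed
    also have "\<dots> = (\<Sum>b\<in>(Basis::'a set). 8 * R\<^sup>2 * ((\<integral>w. phi w \<partial>lborel) - (\<integral>w. phi w * cos (((1 / R) *\<^sub>R b) \<bullet> w) \<partial>lborel)))"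
    proof (rule sum.cong[OF refl])
      fix b :: 'a
      have "(\<lambda>w. phi w * (8 * R\<^sup>2 * (1 - cos (((1 / R) *\<^sub>R b) \<bullet> w)))) = (\<lambda>w. 8 * R\<^sup>2 * (phi w - phi w * cos (((1 / R) *\<^sub>R b) \<bullet> w)))"
        by (auto simp: algebra_simps)
      thus "(\<integral>w. phi w * (8 * R\<^sup>2 * (1 - cos (((1 / R) *\<^sub>R b) \<bullet> w))) \<partial>lborel) = 8 * R\<^sup>2 * ((\<integral>w. phi w \<partial>lborel) - (\<integral>w. phi w * cos (((1 / R) *\<^sub>R b) \<bullet> w) \<partial>lborel))"
        using b(1) icos[of "(1 / R) *\<^sub>R b"] by simp
    qed
    finally show ?thesis .
  qed
  also have "\<dots> = (\<Sum>b\<in>(Basis::'a set). 8 * R\<^sup>2 * (1 - exp (- (t * R powr (- 2 * s)))))"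
  proof (rule sum.cong[OF refl])
    fix b :: 'a assume bB: "b \<in> Basis"
    have "norm ((1 / R) *\<^sub>R b) = 1 / R" using bB R by simp
    hence "norm ((1 / R) *\<^sub>R b) powr (2 * s) = R powr (- 2 * s)"
      using R by (simp add: inverse_powr powr_minus divide_inverse)
    thus "8 * R\<^sup>2 * ((\<integral>w. phi w \<partial>lborel) - (\<integral>w. phi w * cos (((1 / R) *\<^sub>R b) \<bullet> w) \<partial>lborel))
        = 8 * R\<^sup>2 * (1 - exp (- (t * R powr (- 2 * s))))"
      using b(4) fhk_cos_sin(1)[OF fhk, of "(1 / R) *\<^sub>R b"] by simp
  qed
  also have "\<dots> \<le> (\<Sum>b\<in>(Basis::'a set). 8 * R\<^sup>2 * (t * R powr (- 2 * s)))"
  proof (rule sum_mono)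
    fix b :: 'a
    have "1 - exp (- (t * R powr (- 2 * s))) \<le> t * R powr (- 2 * s)"
      using exp_ge_add_one_self[of "- (t * R powr (- 2 * s))"] by simp
    thus "8 * R\<^sup>2 * (1 - exp (- (t * R powr (- 2 * s)))) \<le> 8 * R\<^sup>2 * (t * R powr (- 2 * s))"
      by (intro mult_left_mono) auto
  qed
  also have "\<dots> = 8 * real DIM('a) * t * (R\<^sup>2 * R powr (- 2 * s))" by simp
  also have "R\<^sup>2 * R powr (- 2 * s) = R powr (2 - 2 * s)"
  proof -
    have "R\<^sup>2 = R powr 2" using R by (simp add: powr_numeral)
    moreover have "R powr 2 * R powr (- 2 * s) = R powr (2 + - 2 * s)" by (rule powr_add[symmetric])
    ultimately show ?thesis by simp
  qed
  finally show ?thesis .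
qed

lemma nn_int_one_minus_cos:
  assumes a: "0 < a" and x: "x \<noteq> 0"
  shows "(\<integral>\<^sup>+\<tau>\<in>{0..a}. ennreal (1 - cos (\<tau> * x)) \<partial>lborel) = ennreal (a - sin (a * x) / x)"
proof -
  have "(\<integral>\<^sup>+\<tau>\<in>{0..a}. ennreal (1 - cos (\<tau> * x)) \<partial>lborel)
      = ennreal ((\<lambda>\<tau>. \<tau> - sin (\<tau> * x) / x) a - (\<lambda>\<tau>. \<tau> - sin (\<tau> * x) / x) 0)"
  proof (rule nn_integral_FTC_Icc)
    show "(\<lambda>\<tau>. 1 - cos (\<tau> * x)) \<in> borel_measurable borel" by measurable
    show "((\<lambda>\<tau>. \<tau> - sin (\<tau> * x) / x) has_real_derivative 1 - cos (\<tau> * x)) (at \<tau>)" for \<tau>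
      using x by (auto intro!: derivative_eq_intros)
    show "0 \<le> 1 - cos (\<tau> * x)" for \<tau> by simp
    show "0 \<le> a" using a by simp
  qed
  thus ?thesis by simp
qed

lemma ind_le_cos_avg:
  assumes a: "0 < a"
  shows "ennreal (indicator {y. 2 / a < \<bar>y\<bar>} x) \<le> ennreal (2 / a) * (\<integral>\<^sup>+\<tau>\<in>{0..a}. ennreal (1 - cos (\<tau> * x)) \<partial>lborel)"
proof (cases "2 / a < \<bar>x\<bar>")
  case True
  hence x: "x \<noteq> 0" using a by (auto simp: divide_pos_pos)
  have "sin (a * x) / x \<le> 1 / \<bar>x\<bar>"
  proof -
    have "sin (a * x) / x \<le> \<bar>sin (a * x) / x\<bar>" by (rule abs_ge_self)
    also have "\<dots> = \<bar>sin (a * x)\<bar> / \<bar>x\<bar>" by (simp add: abs_div)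
    also have "\<dots> \<le> 1 / \<bar>x\<bar>" by (intro divide_right_mono) auto
    finally show ?thesis .
  qed
  also have "1 / \<bar>x\<bar> < a / 2" using True a x by (simp add: field_simps)
  finally have sx: "sin (a * x) / x < a / 2" .
  have "1 \<le> 2 / a * (a - sin (a * x) / x)"
  proof -
    have "2 / a * (a / 2) \<le> 2 / a * (a - sin (a * x) / x)" using sx a by (intro mult_left_mono) auto
    thus ?thesis using a by simp
  qed
  hence "ennreal 1 \<le> ennreal (2 / a * (a - sin (a * x) / x))" by (rule ennreal_leI)
  also have "\<dots> = ennreal (2 / a) * ennreal (a - sin (a * x) / x)"
    using a sx by (intro ennreal_mult) (force, linarith)
  finally show ?thesis using True nn_int_one_minus_cos[OF a x] by simp
next
  case False thus ?thesis by simp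
qed

lemma fhk_coord_tail:
  fixes phi :: "'a::euclidean_space \<Rightarrow> real"
  assumes fhk: "frac_heat_kernel s t phi" and a: "0 < a" and t: "0 \<le> t" and s: "0 < s"
    and b: "norm b = 1"
  shows "(\<integral>\<^sup>+w. ennreal (phi w * indicator {w. 2 / a < \<bar>w \<bullet> b\<bar>} w) \<partial>lborel) \<le> ennreal (2 * t * a powr (2 * s))"
proof -
  note fb = fhk_basic[OF fhk]
  note pm[measurable] = fb(2)
  define g where "g \<tau> w = indicator {0..a} \<tau> * ennreal (phi w * (1 - cos (\<tau> * (w \<bullet> b))))" for \<tau> :: real and w :: 'a
  have gm: "(\<lambda>(\<tau>, w). g \<tau> w) \<in> borel_measurable (lborel \<Otimes>\<^sub>M lborel)" unfolding g_def by measurable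
  have "(\<integral>\<^sup>+w. ennreal (phi w * indicator {w. 2 / a < \<bar>w \<bullet> b\<bar>} w) \<partial>lborel)
     \<le> (\<integral>\<^sup>+w. ennreal (2 / a) * (\<integral>\<^sup>+\<tau>. g \<tau> w \<partial>lborel) \<partial>lborel)"
  proof (rule nn_integral_mono)
    fix w :: 'a
    have "ennreal (phi w * indicator {w. 2 / a < \<bar>w \<bullet> b\<bar>} w) = ennreal (phi w) * ennreal (indicator {y. 2 / a < \<bar>y\<bar>} (w \<bullet> b))"
      using fb(3)[of w] by (simp add: ennreal_mult indicator_def)
    also have "\<dots> \<le> ennreal (phi w) * (ennreal (2 / a) * (\<integral>\<^sup>+\<tau>\<in>{0..a}. ennreal (1 - cos (\<tau> * (w \<bullet> b))) \<partial>lborel))"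
      by (intro mult_left_mono ind_le_cos_avg a) simp
    also have "\<dots> = ennreal (2 / a) * (\<integral>\<^sup>+\<tau>. ennreal (phi w) * (ennreal (1 - cos (\<tau> * (w \<bullet> b))) * indicator {0..a} \<tau>) \<partial>lborel)"
      by (simp add: nn_integral_cmult mult_ac)
    also have "\<dots> = ennreal (2 / a) * (\<integral>\<^sup>+\<tau>. g \<tau> w \<partial>lborel)"
      unfolding g_def using fb(3)[of w] by (simp add: ennreal_mult mult_ac)
    finally show "ennreal (phi w * indicator {w. 2 / a < \<bar>w \<bullet> b\<bar>} w) \<le> ennreal (2 / a) * (\<integral>\<^sup>+\<tau>. g \<tau> w \<partial>lborel)" .
  qed
  also have "\<dots> = ennreal (2 / a) * (\<integral>\<^sup>+w. \<integral>\<^sup>+\<tau>. g \<tau> w \<partial>lborel \<partial>lborel)"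
    by (rule nn_integral_cmult) (use gm in measurable)
  also have "(\<integral>\<^sup>+w. \<integral>\<^sup>+\<tau>. g \<tau> w \<partial>lborel \<partial>lborel) = (\<integral>\<^sup>+\<tau>. \<integral>\<^sup>+w. g \<tau> w \<partial>lborel \<partial>lborel)"
  proof -
    have ps: "pair_sigma_finite (lborel :: real measure) (lborel :: 'a measure)"
      by (simp add: pair_sigma_finite_def lborel.sigma_finite_measure_axioms)
    show ?thesis by (rule pair_sigma_finite.Fubini'[OF ps gm])
  qed
  also have "\<dots> \<le> (\<integral>\<^sup>+\<tau>. ennreal (t * a powr (2 * s)) * indicator {0..a} \<tau> \<partial>lborel)"
  proof (rule nn_integral_mono)
    fix \<tau> :: real
    show "(\<integral>\<^sup>+w. g \<tau> w \<partial>lborel) \<le> ennreal (t * a powr (2 * s)) * indicator {0..a} \<tau>"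
    proof (cases "\<tau> \<in> {0..a}")
      case False thus ?thesis by (simp add: g_def)
    next
      case True
      have icos: "integrable lborel (\<lambda>w. phi w * cos ((\<tau> *\<^sub>R b) \<bullet> w))"
        by (rule Bochner_Integration.integrable_bound[where f="phi"])
           (use fb in \<open>auto simp: abs_mult intro!: AE_I2 mult_left_le\<close>)
      have i: "integrable lborel (\<lambda>w. phi w * (1 - cos (\<tau> * (w \<bullet> b))))"
      proof -
        have "integrable lborel (\<lambda>w. phi w - phi w * cos ((\<tau> *\<^sub>R b) \<bullet> w))"
          using fb(1) icos by (rule Bochner_Integration.integrable_diff)
        moreover have "(\<lambda>w. phi w - phi w * cos ((\<tau> *\<^sub>R b) \<bullet> w)) = (\<lambda>w. phi w * (1 - cos (\<tau> * (w \<bullet> b))))"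
          by (auto simp: algebra_simps inner_commute)
        ultimately show ?thesis by simp
      qed
      have "(\<integral>\<^sup>+w. g \<tau> w \<partial>lborel) = (\<integral>\<^sup>+w. ennreal (phi w * (1 - cos (\<tau> * (w \<bullet> b)))) \<partial>lborel)"
        using True by (simp add: g_def)
      also have "\<dots> = ennreal (\<integral>w. phi w * (1 - cos (\<tau> * (w \<bullet> b))) \<partial>lborel)"
        by (rule nn_integral_eq_integral[OF i]) (use fb(3) in \<open>auto intro!: AE_I2\<close>)
      also have "(\<integral>w. phi w * (1 - cos (\<tau> * (w \<bullet> b))) \<partial>lborel) = (\<integral>w. phi w - phi w * cos ((\<tau> *\<^sub>R b) \<bullet> w) \<partial>lborel)"
        by (rule Bochner_Integration.integral_cong) (auto simp: algebra_simps inner_commute)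
      also have "\<dots> = 1 - exp (- (t * norm (\<tau> *\<^sub>R b) powr (2 * s)))"
        using fb(1,4) icos fhk_cos_sin(1)[OF fhk, of "\<tau> *\<^sub>R b"] by simp
      also have "\<dots> = 1 - exp (- (t * \<tau> powr (2 * s)))" using True b by simp
      also have "\<dots> \<le> t * \<tau> powr (2 * s)"
        using exp_ge_add_one_self[of "- (t * \<tau> powr (2 * s))"] by simp
      also have "\<dots> \<le> t * a powr (2 * s)"
        using True t s by (intro mult_left_mono powr_mono2) auto
      finally show ?thesis using True by (simp add: ennreal_leI)
    qed
  qed
  also have "\<dots> = ennreal (t * a powr (2 * s)) * ennreal a"
    using a by (simp add: nn_integral_cmult_indicator)
  finally have "(\<integral>\<^sup>+w. ennreal (phi w * indicator {w. 2 / a < \<bar>w \<bullet> b\<bar>} w) \<partial>lborel)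
      \<le> ennreal (2 / a) * (ennreal (t * a powr (2 * s)) * ennreal a)"
    by (simp add: mult_left_mono)
  also have "\<dots> = ennreal (2 * t * a powr (2 * s))"
    using a t by (simp add: ennreal_mult[symmetric] field_simps)
  finally show ?thesis .
qed

lemma Rpow_combine: fixes R s :: real shows "0 < R \<Longrightarrow> R\<^sup>2 * R powr (- 2 * s) = R powr (2 - 2 * s)"
proof -
  assume R: "0 < R"
  have "R\<^sup>2 = R powr 2" using R by (simp add: powr_numeral)
  moreover have "R powr 2 * R powr (- 2 * s) = R powr (2 + - 2 * s)" by (rule powr_add[symmetric])
  ultimately show ?thesis by simp
qed

lemma fhk_tail:
  fixes phi :: "'a::euclidean_space \<Rightarrow> real"
  assumes fhk: "frac_heat_kernel s t phi" and R: "0 < R" and t: "0 \<le> t" and s: "0 < s" "s \<le> 1"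
  shows "(\<integral>w. indicator (- cball 0 R) w * phi w \<partial>lborel) \<le> 8 * (real DIM('a))\<^sup>2 * t * R powr (- 2 * s)"
proof -
  note fb = fhk_basic[OF fhk]
  note pm[measurable] = fb(2)
  define D where "D = real DIM('a)"
  have D1: "1 \<le> D" unfolding D_def by simp
  define r where "r = R / sqrt D"
  define a where "a = 2 / r"
  have r0: "0 < r" unfolding r_def using R D1 by simp
  have a0: "0 < a" unfolding a_def using r0 by simp
  have ar: "2 / a = r" unfolding a_def using r0 by simp
  have pt: "(indicator (- cball 0 R) w :: real) \<le> (\<Sum>b\<in>(Basis::'a set). indicator {w. r < \<bar>w \<bullet> b\<bar>} w)" for w :: 'a
  proof (cases "w \<in> cball 0 R")
    case True thus ?thesis by (simp add: sum_nonneg)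
  next
    case False
    have "\<exists>b\<in>Basis. r < \<bar>w \<bullet> b\<bar>"
    proof (rule ccontr)
      assume "\<not> ?thesis"
      hence le: "\<And>b. b \<in> Basis \<Longrightarrow> \<bar>w \<bullet> b\<bar> \<le> r" by auto
      have "(norm w)\<^sup>2 = (\<Sum>b\<in>(Basis::'a set). (w \<bullet> b)\<^sup>2)" by (simp add: sq_sum_basis)
      also have "\<dots> \<le> (\<Sum>b\<in>(Basis::'a set). r\<^sup>2)"
        by (intro sum_mono) (metis abs_le_square_iff abs_of_pos le r0)
      also have "\<dots> = D * r\<^sup>2" unfolding D_def by simp
      also have "\<dots> = R\<^sup>2" unfolding r_def using D1 by (simp add: power_divide)
      finally have "norm w \<le> R" using R by (simp add: abs_le_square_iff[symmetric] power2_le_iff_abs_le)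
      thus False using False by simp
    qed
    then obtain b where b: "b \<in> Basis" "r < \<bar>w \<bullet> b\<bar>" by blast
    have "indicator {w. r < \<bar>w \<bullet> b\<bar>} w \<le> (\<Sum>b\<in>(Basis::'a set). indicator {w. r < \<bar>w \<bullet> b\<bar>} w :: real)"
      by (rule member_le_sum) (use b in auto)
    thus ?thesis using False b by simp
  qed
  have ii: "integrable lborel (\<lambda>w. indicator (- cball 0 R) w * phi w)"
    by (rule Bochner_Integration.integrable_bound[where f=phi]) (use fb in \<open>auto intro!: AE_I2 simp: indicator_def\<close>)
  have "ennreal (\<integral>w. indicator (- cball 0 R) w * phi w \<partial>lborel) = (\<integral>\<^sup>+w. ennreal (indicator (- cball 0 R) w * phi w) \<partial>lborel)"
    by (rule nn_integral_eq_integral[OF ii, symmetric]) (use fb in \<open>auto intro!: AE_I2\<close>)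
  also have "\<dots> \<le> (\<integral>\<^sup>+w. (\<Sum>b\<in>(Basis::'a set). ennreal (phi w * indicator {w. 2 / a < \<bar>w \<bullet> b\<bar>} w)) \<partial>lborel)"
  proof (rule nn_integral_mono)
    fix w :: 'a
    have "indicator (- cball 0 R) w * phi w \<le> (\<Sum>b\<in>(Basis::'a set). phi w * indicator {w. 2 / a < \<bar>w \<bullet> b\<bar>} w)"
      unfolding ar using mult_right_mono[OF pt fb(3)[of w]] by (simp add: sum_distrib_left mult_ac)
    hence "ennreal (indicator (- cball 0 R) w * phi w) \<le> ennreal (\<Sum>b\<in>(Basis::'a set). phi w * indicator {w. 2 / a < \<bar>w \<bullet> b\<bar>} w)"
      by (rule ennreal_leI)
    also have "\<dots> = (\<Sum>b\<in>(Basis::'a set). ennreal (phi w * indicator {w. 2 / a < \<bar>w \<bullet> b\<bar>} w))"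
      by (rule sum_ennreal[symmetric]) (use fb(3) in simp)
    finally show "ennreal (indicator (- cball 0 R) w * phi w) \<le> (\<Sum>b\<in>(Basis::'a set). ennreal (phi w * indicator {w. 2 / a < \<bar>w \<bullet> b\<bar>} w))" .
  qed
  also have "\<dots> = (\<Sum>b\<in>(Basis::'a set). \<integral>\<^sup>+w. ennreal (phi w * indicator {w. 2 / a < \<bar>w \<bullet> b\<bar>} w) \<partial>lborel)"
    by (rule nn_integral_sum) measurable
  also have "\<dots> \<le> (\<Sum>b\<in>(Basis::'a set). ennreal (2 * t * a powr (2 * s)))"
    by (intro sum_mono fhk_coord_tail[OF fhk a0 t s(1)]) simp
  also have "\<dots> = ennreal (D * (2 * t * a powr (2 * s)))"
    unfolding D_def using t by (simp add: ennreal_mult ennreal_of_nat_eq_real_of_nat)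
  finally have le1: "(\<integral>w. indicator (- cball 0 R) w * phi w \<partial>lborel) \<le> D * (2 * t * a powr (2 * s))"
    using t a0 D1 by (subst (asm) ennreal_le_iff) auto
  have "a powr (2 * s) = (2 * sqrt D) powr (2 * s) * R powr (- 2 * s)"
  proof -
    have "a = (2 * sqrt D) / R" unfolding a_def r_def by simp
    hence "a powr (2 * s) = (2 * sqrt D) powr (2 * s) / R powr (2 * s)"
      using R D1 by (simp add: powr_divide)
    thus ?thesis using R by (simp add: powr_minus divide_inverse)
  qed
  moreover have "(2 * sqrt D) powr (2 * s) \<le> 4 * D"
  proof -
    have "1 \<le> sqrt D" using D1 by simp
    hence g1: "1 \<le> 2 * sqrt D" by linarith
    have "(2 * sqrt D) powr (2 * s) \<le> (2 * sqrt D) powr 2" using g1 s by (intro powr_mono) auto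
    also have "\<dots> = (2 * sqrt D)\<^sup>2" using g1 D1 by (subst powr_numeral) auto
    also have "\<dots> = 4 * D" using D1 by (simp add: power_mult_distrib)
    finally show ?thesis .
  qed
  ultimately have "a powr (2 * s) \<le> 4 * D * R powr (- 2 * s)"
    by (simp add: mult_right_mono)
  hence "D * (2 * t * a powr (2 * s)) \<le> D * (2 * t * (4 * D * R powr (- 2 * s)))"
    using t D1 by (intro mult_left_mono) auto
  with le1 show ?thesis unfolding D_def by (simp add: power2_eq_square mult_ac)
qed

lemma fhk_m2:
  fixes phi :: "'a::euclidean_space \<Rightarrow> real"
  assumes fhk: "frac_heat_kernel s t phi" and R: "0 < R" and t: "0 \<le> t" and s: "0 < s" "s \<le> 1"
  shows "(\<integral>w. indicator (cball 0 R) w * phi w * (norm w)\<^sup>2 \<partial>lborel) / (\<integral>w. indicator (cball 0 R) w * phi w \<partial>lborel)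
      \<le> 16 * (real DIM('a))\<^sup>2 * t * R powr (2 - 2 * s)"
proof -
  note fb = fhk_basic[OF fhk]
  define D where "D = real DIM('a)"
  have D1: "1 \<le> D" unfolding D_def by simp
  define Z where "Z = (\<integral>w. indicator (cball 0 R) w * phi w \<partial>lborel)"
  define T where "T = (\<integral>w. indicator (- cball 0 R) w * phi w \<partial>lborel)"
  define M where "M = (\<integral>w. indicator (cball 0 R) w * phi w * (norm w)\<^sup>2 \<partial>lborel)"
  have csb: "cball 0 R \<in> sets borel" by (simp add: borel_closed)
  have iZ: "integrable lborel (\<lambda>w. indicator (cball 0 R) w * phi w)"
    by (rule Bochner_Integration.integrable_bound[where f=phi]) (use fb csb in \<open>auto intro!: AE_I2 simp: indicator_def\<close>)
  have iT: "integrable lborel (\<lambda>w. indicator (- cball 0 R) w * phi w)"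
    by (rule Bochner_Integration.integrable_bound[where f=phi]) (use fb csb in \<open>auto intro!: AE_I2 simp: indicator_def\<close>)
  have pr: "phi x * (norm x)\<^sup>2 \<le> R\<^sup>2 * phi x" if "norm x \<le> R" for x
  proof -
    have "(norm x)\<^sup>2 \<le> R\<^sup>2" using that by (intro power_mono) auto
    thus ?thesis using fb(3)[of x] by (simp add: mult_left_mono mult.commute)
  qed
  have iM: "integrable lborel (\<lambda>w. indicator (cball 0 R) w * phi w * (norm w)\<^sup>2)"
    by (rule Bochner_Integration.integrable_bound[where f="\<lambda>w. R\<^sup>2 * phi w"])
       (use fb csb R pr in \<open>auto intro!: AE_I2 simp: indicator_def\<close>)
  have Z0: "0 \<le> Z" unfolding Z_def by (rule integral_nonneg_AE) (use fb in \<open>auto intro!: AE_I2\<close>)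
  have ZT: "Z + T = 1"
  proof -
    have "Z + T = (\<integral>w. indicator (cball 0 R) w * phi w + indicator (- cball 0 R) w * phi w \<partial>lborel)"
      unfolding Z_def T_def using iZ iT by simp
    also have "\<dots> = (\<integral>w. phi w \<partial>lborel)"
      by (rule Bochner_Integration.integral_cong) (auto simp: indicator_def)
    finally show ?thesis using fb(4) by simp
  qed
  have MZ: "M \<le> R\<^sup>2 * Z"
  proof -
    have "M \<le> (\<integral>w. R\<^sup>2 * (indicator (cball 0 R) w * phi w) \<partial>lborel)"
      unfolding M_def
      by (rule integral_mono[OF iM]) (use iZ fb R pr in \<open>auto simp: indicator_def\<close>)
    thus ?thesis unfolding Z_def by simp
  qed
  have MB: "M \<le> 8 * D * t * R powr (2 - 2 * s)"
    unfolding M_def D_def by (rule fhk_second_moment[OF fhk R t])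
  have TB: "T \<le> 8 * D\<^sup>2 * t * R powr (- 2 * s)" unfolding T_def D_def by (rule fhk_tail[OF fhk R t s])
  have RHS0: "0 \<le> 16 * D\<^sup>2 * t * R powr (2 - 2 * s)" using t by simp
  consider "Z = 0" | "1/2 \<le> Z" | "0 < Z" "Z < 1/2" using Z0 by linarith
  hence "M / Z \<le> 16 * D\<^sup>2 * t * R powr (2 - 2 * s)"
  proof cases
    case 1 thus ?thesis using RHS0 by simp
  next
    case 2
    have "M / Z \<le> M / (1/2)"
    proof -
      have "0 \<le> M" unfolding M_def by (rule integral_nonneg_AE) (use fb in \<open>auto intro!: AE_I2\<close>)
      thus ?thesis using 2 by (intro divide_left_mono) auto
    qed
    also have "\<dots> = 2 * M" by simp
    also have "\<dots> \<le> 16 * D * t * R powr (2 - 2 * s)" using MB by simp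
    also have "\<dots> \<le> 16 * D\<^sup>2 * t * R powr (2 - 2 * s)"
    proof -
      have "D \<le> D\<^sup>2" using D1 by (simp add: power2_eq_square)
      thus ?thesis using t by (intro mult_right_mono) auto
    qed
    finally show ?thesis .
  next
    case 3
    have "M / Z \<le> R\<^sup>2" using MZ 3 by (simp add: divide_le_eq mult.commute)
    also have "R\<^sup>2 = R\<^sup>2 * 1" by simp
    also have "\<dots> \<le> R\<^sup>2 * (16 * D\<^sup>2 * t * R powr (- 2 * s))"
    proof (rule mult_left_mono)
      show "1 \<le> 16 * D\<^sup>2 * t * R powr (- 2 * s)" using TB ZT 3 by linarith
    qed simp
    also have "\<dots> = 16 * D\<^sup>2 * t * (R\<^sup>2 * R powr (- 2 * s))" by simp
    also have "\<dots> = 16 * D\<^sup>2 * t * R powr (2 - 2 * s)" using Rpow_combine[OF R] by simp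
    finally show ?thesis .
  qed
  thus ?thesis unfolding M_def Z_def D_def .
qed

lemma nn_translate:
  fixes H :: "'a::euclidean_space \<Rightarrow> ennreal"
  assumes "H \<in> borel_measurable borel"
  shows "(\<integral>\<^sup>+z. H z \<partial>lborel) = (\<integral>\<^sup>+z. H (c + z) \<partial>lborel)"
proof -
  have "(\<integral>\<^sup>+z. H z \<partial>lborel) = (\<integral>\<^sup>+z. H z \<partial>(distr lborel borel ((+) c)))"
    by (simp add: lborel_distr_plus)
  also have "\<dots> = (\<integral>\<^sup>+z. H (c + z) \<partial>lborel)"
    by (rule nn_integral_distr) (use assms in auto)
  finally show ?thesis .
qed

lemma meas_cont_comp:
  "continuous_on UNIV g \<Longrightarrow> f \<in> borel_measurable borel \<Longrightarrow> (\<lambda>x. f (g x)) \<in> borel_measurable borel"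
  using measurable_compose[OF borel_measurable_continuous_onI] by blast

lemma cball_borel[measurable]: "cball (0::'a::euclidean_space) R \<in> sets borel"
  by (simp add: borel_closed)

lemma conv_nn:
  fixes phi :: "'a::euclidean_space \<Rightarrow> real" and f :: "'a \<times> 'a \<Rightarrow> real" and G :: "'a \<times> 'a \<Rightarrow> ennreal"
  assumes pm[measurable]: "phi \<in> borel_measurable borel"
    and fm[measurable]: "f \<in> borel_measurable borel"
    and Gm[measurable]: "G \<in> borel_measurable borel"
    and pn: "\<And>w. 0 \<le> phi w" and fn: "\<And>z. 0 \<le> f z"
  shows "(\<integral>\<^sup>+z. G z * (\<integral>\<^sup>+w. ennreal (indicator (cball 0 R) w * phi w * f (fst z, snd z - w)) \<partial>lborel) \<partial>lborel)
       = (\<integral>\<^sup>+z. ennreal (f z) * (\<integral>\<^sup>+w. ennreal (indicator (cball 0 R) w * phi w) * G (fst z, snd z + w) \<partial>lborel) \<partial>lborel)"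
proof -
  have ps: "pair_sigma_finite (lborel :: ('a \<times> 'a) measure) (lborel :: 'a measure)"
    by (simp add: pair_sigma_finite_def lborel.sigma_finite_measure_axioms)
  define k where "k w = indicator (cball 0 R) w * phi w" for w :: 'a
  have km[measurable]: "k \<in> borel_measurable borel" unfolding k_def by measurable
  define F1 where "F1 z w = G z * ennreal (k w * f (fst z, snd z - w))" for z w
  define F2 where "F2 z w = G (fst z, snd z + w) * ennreal (k w * f z)" for z w
  have sp: "sets ((lborel :: ('a \<times> 'a) measure) \<Otimes>\<^sub>M (lborel :: 'a measure)) = sets borel"
    by (simp add: borel_prod[symmetric] sets_pair_measure_cong[OF sets_lborel sets_lborel])
  have c1: "(\<lambda>x::('a \<times> 'a) \<times> 'a. (fst (fst x), snd (fst x) - snd x)) \<in> borel_measurable borel"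
    by (intro borel_measurable_continuous_onI continuous_intros)
  have c2: "(\<lambda>x::('a \<times> 'a) \<times> 'a. (fst (fst x), snd (fst x) + snd x)) \<in> borel_measurable borel"
    by (intro borel_measurable_continuous_onI continuous_intros)
  have f1: "(\<lambda>x::('a \<times> 'a) \<times> 'a. f (fst (fst x), snd (fst x) - snd x)) \<in> borel_measurable borel"
    using measurable_compose[OF c1 fm] by simp
  have g2: "(\<lambda>x::('a \<times> 'a) \<times> 'a. G (fst (fst x), snd (fst x) + snd x)) \<in> borel_measurable borel"
    using measurable_compose[OF c2 Gm] by simp
  have fstm: "(fst :: ('a \<times> 'a) \<times> 'a \<Rightarrow> 'a \<times> 'a) \<in> borel_measurable borel"
    by (intro borel_measurable_continuous_onI continuous_intros)
  have sndm: "(snd :: ('a \<times> 'a) \<times> 'a \<Rightarrow> 'a) \<in> borel_measurable borel"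
    by (intro borel_measurable_continuous_onI continuous_intros)
  have gf[measurable]: "(\<lambda>x::('a \<times> 'a) \<times> 'a. G (fst x)) \<in> borel_measurable borel"
    using measurable_compose[OF fstm Gm] by simp
  have ks[measurable]: "(\<lambda>x::('a \<times> 'a) \<times> 'a. k (snd x)) \<in> borel_measurable borel"
    using measurable_compose[OF sndm km] by simp
  have ff[measurable]: "(\<lambda>x::('a \<times> 'a) \<times> 'a. f (fst x)) \<in> borel_measurable borel"
    using measurable_compose[OF fstm fm] by simp
  note f1[measurable] g2[measurable]
  have "(\<lambda>x::('a \<times> 'a) \<times> 'a. F1 (fst x) (snd x)) \<in> borel_measurable borel"
    unfolding F1_def by measurable
  hence F1m: "(\<lambda>(z, w). F1 z w) \<in> borel_measurable ((lborel :: ('a \<times> 'a) measure) \<Otimes>\<^sub>M (lborel :: 'a measure))"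
    using measurable_cong_sets[OF sp refl, of "borel :: ennreal measure"] by (simp add: case_prod_beta')
  have "(\<lambda>x::('a \<times> 'a) \<times> 'a. F2 (fst x) (snd x)) \<in> borel_measurable borel"
    unfolding F2_def by measurable
  hence F2m: "(\<lambda>(z, w). F2 z w) \<in> borel_measurable ((lborel :: ('a \<times> 'a) measure) \<Otimes>\<^sub>M (lborel :: 'a measure))"
    using measurable_cong_sets[OF sp refl, of "borel :: ennreal measure"] by (simp add: case_prod_beta')
  have "(\<integral>\<^sup>+z. G z * (\<integral>\<^sup>+w. ennreal (k w * f (fst z, snd z - w)) \<partial>lborel) \<partial>lborel)
      = (\<integral>\<^sup>+z. \<integral>\<^sup>+w. F1 z w \<partial>lborel \<partial>lborel)"
    unfolding F1_def by (intro nn_integral_cong nn_integral_cmult[symmetric]) measurable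
  also have "\<dots> = (\<integral>\<^sup>+w. \<integral>\<^sup>+z. F1 z w \<partial>lborel \<partial>lborel)"
    by (rule pair_sigma_finite.Fubini'[OF ps F1m, symmetric])
  also have "\<dots> = (\<integral>\<^sup>+w. \<integral>\<^sup>+z. F2 z w \<partial>lborel \<partial>lborel)"
  proof (rule nn_integral_cong)
    fix w :: 'a
    have "(\<lambda>z::'a \<times> 'a. f (fst z, snd z - w)) \<in> borel_measurable borel"
      by (rule meas_cont_comp[OF _ fm]) (intro continuous_intros)
    hence m: "(\<lambda>z. F1 z w) \<in> borel_measurable borel" unfolding F1_def by measurable
    have "(\<integral>\<^sup>+z. F1 z w \<partial>lborel) = (\<integral>\<^sup>+z. F1 ((0, w) + z) w \<partial>lborel)"
      by (rule nn_translate[OF m])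
    also have "\<dots> = (\<integral>\<^sup>+z. F2 z w \<partial>lborel)"
      unfolding F1_def F2_def by (intro nn_integral_cong) (auto simp: add.commute prod_eq_iff)
    finally show "(\<integral>\<^sup>+z. F1 z w \<partial>lborel) = (\<integral>\<^sup>+z. F2 z w \<partial>lborel)" .
  qed
  also have "\<dots> = (\<integral>\<^sup>+z. \<integral>\<^sup>+w. F2 z w \<partial>lborel \<partial>lborel)"
    by (rule pair_sigma_finite.Fubini'[OF ps F2m])
  also have "\<dots> = (\<integral>\<^sup>+z. ennreal (f z) * (\<integral>\<^sup>+w. ennreal (k w) * G (fst z, snd z + w) \<partial>lborel) \<partial>lborel)"
  proof (rule nn_integral_cong)
    fix z :: "'a \<times> 'a"
    have "(\<integral>\<^sup>+w. F2 z w \<partial>lborel) = (\<integral>\<^sup>+w. ennreal (f z) * (ennreal (k w) * G (fst z, snd z + w)) \<partial>lborel)"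
    proof (intro nn_integral_cong)
      fix w
      have "0 \<le> k w" unfolding k_def using pn[of w] by simp
      thus "F2 z w = ennreal (f z) * (ennreal (k w) * G (fst z, snd z + w))"
        unfolding F2_def using fn[of z] by (simp add: ennreal_mult mult_ac)
    qed
    also have "\<dots> = ennreal (f z) * (\<integral>\<^sup>+w. ennreal (k w) * G (fst z, snd z + w) \<partial>lborel)"
      by (rule nn_integral_cmult) measurable
    finally show "(\<integral>\<^sup>+w. F2 z w \<partial>lborel) = ennreal (f z) * (\<integral>\<^sup>+w. ennreal (k w) * G (fst z, snd z + w) \<partial>lborel)" .
  qed
  finally show ?thesis unfolding k_def .
qed

lemma prod_lborel_meas:
  fixes h :: "('a::euclidean_space \<times> 'a) \<times> 'a \<Rightarrow> 'b::topological_space"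
  assumes "h \<in> borel_measurable borel"
  shows "h \<in> borel_measurable ((lborel :: ('a \<times> 'a) measure) \<Otimes>\<^sub>M (lborel :: 'a measure))"
proof -
  have sp: "sets ((lborel :: ('a \<times> 'a) measure) \<Otimes>\<^sub>M (lborel :: 'a measure)) = sets borel"
    by (simp add: borel_prod[symmetric] sets_pair_measure_cong[OF sets_lborel sets_lborel])
  show ?thesis using assms measurable_cong_sets[OF sp refl, of "borel :: 'b measure"] by simp
qed

lemma kf_meas:
  fixes phi :: "'a::euclidean_space \<Rightarrow> real" and f :: "'a \<times> 'a \<Rightarrow> real"
  assumes pm: "phi \<in> borel_measurable borel" and fm: "f \<in> borel_measurable borel"
  shows "(\<lambda>x::('a \<times> 'a) \<times> 'a. indicator (cball 0 R) (snd x) * phi (snd x) * f (fst (fst x), snd (fst x) - snd x)) \<in> borel_measurable borel"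
proof -
  have k: "(\<lambda>w::'a. indicator (cball 0 R) w * phi w) \<in> borel_measurable borel" using pm by measurable
  have a: "(\<lambda>x::('a \<times> 'a) \<times> 'a. indicator (cball 0 R) (snd x) * phi (snd x)) \<in> borel_measurable borel"
    by (rule meas_cont_comp[OF _ k]) (intro continuous_intros)
  have b: "(\<lambda>x::('a \<times> 'a) \<times> 'a. f (fst (fst x), snd (fst x) - snd x)) \<in> borel_measurable borel"
    by (rule meas_cont_comp[OF _ fm]) (intro continuous_intros)
  show ?thesis using a b by (rule borel_measurable_times)
qed

lemma trunc_conv_eq:
  "trunc_conv phi R f z = (\<integral>w. indicator (cball 0 R) w * phi w * f (fst z, snd z - w) \<partial>lborel)
      / (\<integral>w. indicator (cball 0 R) w * phi w \<partial>lborel)"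
  by (cases z) (simp add: trunc_conv_def)

lemma trunc_conv_props:
  fixes phi :: "'a::euclidean_space \<Rightarrow> real" and f :: "'a \<times> 'a \<Rightarrow> real"
  assumes pm[measurable]: "phi \<in> borel_measurable borel" and pn: "\<And>w. 0 \<le> phi w"
    and pi: "integrable lborel phi"
    and Z: "0 < (\<integral>w. indicator (cball 0 R) w * phi w \<partial>lborel)"
    and fm[measurable]: "f \<in> borel_measurable borel" and fn: "\<And>z. 0 \<le> f z"
    and ff: "(\<integral>\<^sup>+z. ennreal (f z) \<partial>lborel) < \<infinity>"
  shows "trunc_conv phi R f \<in> borel_measurable borel"
    and "\<And>z. 0 \<le> trunc_conv phi R f z"
    and "\<And>G. G \<in> borel_measurable borel \<Longrightarrow>
          (\<integral>\<^sup>+z. G z * ennreal (trunc_conv phi R f z) \<partial>lborel)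
        = ennreal (1 / (\<integral>w. indicator (cball 0 R) w * phi w \<partial>lborel)) *
          (\<integral>\<^sup>+z. ennreal (f z) * (\<integral>\<^sup>+w. ennreal (indicator (cball 0 R) w * phi w) * G (fst z, snd z + w) \<partial>lborel) \<partial>lborel)"
proof -
  define Zv where "Zv = (\<integral>w. indicator (cball 0 R) w * phi w \<partial>lborel)"
  have Z0: "0 < Zv" using Z unfolding Zv_def .
  define K where "K x = indicator (cball 0 R) (snd x) * phi (snd x) * f (fst (fst x), snd (fst x) - snd x)" for x :: "('a \<times> 'a) \<times> 'a"
  have Km: "K \<in> borel_measurable borel" unfolding K_def by (rule kf_meas[OF pm fm])
  have Kp: "(\<lambda>(z, w). K (z, w)) \<in> borel_measurable ((lborel :: ('a \<times> 'a) measure) \<Otimes>\<^sub>M (lborel :: 'a measure))"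
    using prod_lborel_meas[OF Km] by simp
  have Kn: "0 \<le> K x" for x unfolding K_def using pn fn by simp
  show tcm: "trunc_conv phi R f \<in> borel_measurable borel"
  proof -
    have "(\<lambda>z. \<integral>w. K (z, w) \<partial>lborel) \<in> borel_measurable (lborel :: ('a \<times> 'a) measure)"
      by (rule lborel.borel_measurable_lebesgue_integral) (use Kp in simp)
    hence "(\<lambda>z. (\<integral>w. K (z, w) \<partial>lborel) / Zv) \<in> borel_measurable (lborel :: ('a \<times> 'a) measure)"
      by measurable
    moreover have "trunc_conv phi R f = (\<lambda>z. (\<integral>w. K (z, w) \<partial>lborel) / Zv)"
      unfolding K_def Zv_def by (rule ext) (simp add: trunc_conv_eq)
    ultimately show ?thesis by simp
  qed
  show tcn: "0 \<le> trunc_conv phi R f z" for z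
    unfolding trunc_conv_eq using Z pn fn by (intro divide_nonneg_nonneg integral_nonneg) auto
  define F where "F z = (\<integral>\<^sup>+w. ennreal (K (z, w)) \<partial>lborel)" for z
  have Fm: "F \<in> borel_measurable lborel"
    unfolding F_def by (rule lborel.borel_measurable_nn_integral) (use Kp in measurable)
  have ik: "integrable lborel (\<lambda>w. indicator (cball 0 R) w * phi w)"
    by (rule Bochner_Integration.integrable_bound[where f=phi]) (use pi pn in \<open>auto intro!: AE_I2 simp: indicator_def\<close>)
  have nk: "(\<integral>\<^sup>+w. ennreal (indicator (cball 0 R) w * phi w) \<partial>lborel) = ennreal Zv"
    unfolding Zv_def by (rule nn_integral_eq_integral[OF ik]) (use pn in \<open>auto intro!: AE_I2\<close>)
  have conv: "(\<integral>\<^sup>+z. G z * F z \<partial>lborel)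
      = (\<integral>\<^sup>+z. ennreal (f z) * (\<integral>\<^sup>+w. ennreal (indicator (cball 0 R) w * phi w) * G (fst z, snd z + w) \<partial>lborel) \<partial>lborel)"
    if [measurable]: "G \<in> borel_measurable borel" for G
    unfolding F_def K_def using conv_nn[OF pm fm that pn fn, of R] by simp
  have "(\<integral>\<^sup>+z. F z \<partial>lborel) = (\<integral>\<^sup>+z. 1 * F z \<partial>lborel)" by simp
  also have "\<dots> = (\<integral>\<^sup>+z. ennreal (f z) * ennreal Zv \<partial>lborel)" by (subst conv) (simp_all add: nk)
  also have "\<dots> = (\<integral>\<^sup>+z. ennreal (f z) \<partial>lborel) * ennreal Zv" by (rule nn_integral_multc) measurable
  also have "\<dots> < \<infinity>" using ff by (simp add: ennreal_mult_less_top)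
  finally have "(\<integral>\<^sup>+z. F z \<partial>lborel) \<noteq> \<infinity>" by simp
  hence aeF: "AE z in lborel. F z \<noteq> \<infinity>" by (rule nn_integral_PInf_AE[OF Fm])
  have aeT: "AE z in lborel. ennreal (trunc_conv phi R f z) = ennreal (1 / Zv) * F z"
    using aeF
  proof (rule AE_mp, intro AE_I2 impI)
    fix z assume Fz: "F z \<noteq> \<infinity>"
    have mK: "(\<lambda>w. K (z, w)) \<in> borel_measurable lborel"
      using Km by (simp add: measurable_Pair2')
    have iK: "integrable lborel (\<lambda>w. K (z, w))"
      by (rule integrableI_nonneg[OF mK]) (use Kn Fz in \<open>auto simp: F_def top.not_eq_extremum\<close>)
    have "ennreal (\<integral>w. K (z, w) \<partial>lborel) = F z"
      unfolding F_def by (rule nn_integral_eq_integral[OF iK, symmetric]) (use Kn in auto)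
    moreover have "trunc_conv phi R f z = (\<integral>w. K (z, w) \<partial>lborel) * (1 / Zv)"
      unfolding K_def Zv_def trunc_conv_eq by simp
    moreover have "0 \<le> (\<integral>w. K (z, w) \<partial>lborel)" using Kn by (simp add: integral_nonneg)
    moreover have "ennreal ((\<integral>w. K (z, w) \<partial>lborel) * (1 / Zv)) = ennreal (\<integral>w. K (z, w) \<partial>lborel) * ennreal (1 / Zv)"
      using Z0 Kn by (intro ennreal_mult) (auto simp: integral_nonneg)
    ultimately show "ennreal (trunc_conv phi R f z) = ennreal (1 / Zv) * F z"
      by (simp only: mult.commute)
  qed
  show "(\<integral>\<^sup>+z. G z * ennreal (trunc_conv phi R f z) \<partial>lborel)
        = ennreal (1 / (\<integral>w. indicator (cball 0 R) w * phi w \<partial>lborel)) *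
          (\<integral>\<^sup>+z. ennreal (f z) * (\<integral>\<^sup>+w. ennreal (indicator (cball 0 R) w * phi w) * G (fst z, snd z + w) \<partial>lborel) \<partial>lborel)"
    if Gm[measurable]: "G \<in> borel_measurable borel" for G
  proof -
    have "(\<integral>\<^sup>+z. G z * ennreal (trunc_conv phi R f z) \<partial>lborel) = (\<integral>\<^sup>+z. ennreal (1 / Zv) * (G z * F z) \<partial>lborel)"
      by (rule nn_integral_cong_AE) (use aeT in \<open>auto simp: mult_ac\<close>)
    also have "\<dots> = ennreal (1 / Zv) * (\<integral>\<^sup>+z. G z * F z \<partial>lborel)"
      by (rule nn_integral_cmult) (use Fm in measurable)
    finally show ?thesis using conv[OF Gm] unfolding Zv_def by simp
  qed
qed

lemma P2a_D:
  assumes "g \<in> P2a"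
  shows "g \<in> borel_measurable borel" "\<And>z. 0 \<le> g z" "integrable lborel g" "(\<integral>z. g z \<partial>lborel) = 1"
    "integrable lborel (\<lambda>z. (norm z)\<^sup>2 * g z)" "(\<integral>\<^sup>+z. ennreal (g z) \<partial>lborel) = 1"
    "(\<integral>\<^sup>+z. ennreal ((norm z)\<^sup>2 * g z) \<partial>lborel) < \<infinity>"
proof -
  show m: "g \<in> borel_measurable borel" and n: "\<And>z. 0 \<le> g z" and i: "integrable lborel g"
    and e: "(\<integral>z. g z \<partial>lborel) = 1" and s: "integrable lborel (\<lambda>z. (norm z)\<^sup>2 * g z)"
    using assms unfolding P2a_def by auto
  show "(\<integral>\<^sup>+z. ennreal (g z) \<partial>lborel) = 1"
    using nn_integral_eq_integral[OF i] n e by simp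
  have "(\<integral>\<^sup>+z. ennreal ((norm z)\<^sup>2 * g z) \<partial>lborel) = ennreal (\<integral>z. (norm z)\<^sup>2 * g z \<partial>lborel)"
    by (rule nn_integral_eq_integral[OF s]) (use n in simp)
  thus "(\<integral>\<^sup>+z. ennreal ((norm z)\<^sup>2 * g z) \<partial>lborel) < \<infinity>" by simp
qed

lemma P2a_I:
  fixes g :: "'a::euclidean_space \<times> 'a \<Rightarrow> real"
  assumes m[measurable]: "g \<in> borel_measurable borel" and n: "\<And>z. 0 \<le> g z"
    and e: "(\<integral>\<^sup>+z. ennreal (g z) \<partial>lborel) = 1"
    and s: "(\<integral>\<^sup>+z. ennreal ((norm z)\<^sup>2 * g z) \<partial>lborel) < \<infinity>"
  shows "g \<in> P2a"
proof -
  have i: "integrable lborel g" by (rule integrableI_nonneg) (use n e in auto)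
  have "(\<integral>z. g z \<partial>lborel) = enn2real (\<integral>\<^sup>+z. ennreal (g z) \<partial>lborel)"
    by (rule integral_eq_nn_integral) (use n in auto)
  hence e1: "(\<integral>z. g z \<partial>lborel) = 1" using e by simp
  have i2: "integrable lborel (\<lambda>z. (norm z)\<^sup>2 * g z)" by (rule integrableI_nonneg) (use n s in auto)
  show ?thesis unfolding P2a_def using i e1 i2 n by auto
qed

lemma norm_pair_sq: "(norm (x, v))\<^sup>2 = (norm x)\<^sup>2 + (norm v)\<^sup>2"
  by (simp add: norm_Pair)

lemma norm_add_sq_le: "(norm (a + b :: 'a::real_normed_vector))\<^sup>2 \<le> 2 * (norm a)\<^sup>2 + 2 * (norm b)\<^sup>2"
proof -
  have "(norm (a + b))\<^sup>2 \<le> (norm a + norm b)\<^sup>2" by (intro power_mono norm_triangle_ineq) simp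
  also have "\<dots> \<le> 2 * (norm a)\<^sup>2 + 2 * (norm b)\<^sup>2" by (smt (verit) sum_squares_bound power2_sum)
  finally show ?thesis .
qed

lemma tc_P2a:
  fixes phi :: "'a::euclidean_space \<Rightarrow> real" and f :: "'a \<times> 'a \<Rightarrow> real"
  assumes pm[measurable]: "phi \<in> borel_measurable borel" and pn: "\<And>w. 0 \<le> phi w"
    and pi: "integrable lborel phi"
    and Z: "0 < (\<integral>w. indicator (cball 0 R) w * phi w \<partial>lborel)"
    and f: "f \<in> P2a"
  shows "trunc_conv phi R f \<in> P2a"
proof -
  note fD = P2a_D[OF f]
  note fm[measurable] = fD(1)
  define Zv where "Zv = (\<integral>w. indicator (cball 0 R) w * phi w \<partial>lborel)"
  have Z0: "0 < Zv" using Z unfolding Zv_def .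
  have ff: "(\<integral>\<^sup>+z. ennreal (f z) \<partial>lborel) < \<infinity>" using fD(6) by simp
  note tp = trunc_conv_props[OF pm pn pi Z fm fD(2) ff]
  have ik: "integrable lborel (\<lambda>w. indicator (cball 0 R) w * phi w)"
    by (rule Bochner_Integration.integrable_bound[where f=phi]) (use pi pn in \<open>auto intro!: AE_I2 simp: indicator_def\<close>)
  have nk: "(\<integral>\<^sup>+w. ennreal (indicator (cball 0 R) w * phi w) \<partial>lborel) = ennreal Zv"
    unfolding Zv_def by (rule nn_integral_eq_integral[OF ik]) (use pn in \<open>auto intro!: AE_I2\<close>)
  have ZZ: "ennreal (1 / Zv) * ennreal Zv = 1" using Z0 by (simp add: ennreal_mult[symmetric])
  show ?thesis
  proof (rule P2a_I[OF tp(1) tp(2)])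
    have "(\<integral>\<^sup>+z. ennreal (trunc_conv phi R f z) \<partial>lborel) = (\<integral>\<^sup>+z. 1 * ennreal (trunc_conv phi R f z) \<partial>lborel)" by simp
    also have "\<dots> = ennreal (1 / Zv) * (\<integral>\<^sup>+z. ennreal (f z) * ennreal Zv \<partial>lborel)"
      using tp(3)[of "\<lambda>_. 1"] unfolding Zv_def by (simp add: nk[unfolded Zv_def])
    also have "\<dots> = ennreal (1 / Zv) * ((\<integral>\<^sup>+z. ennreal (f z) \<partial>lborel) * ennreal Zv)"
      by (subst nn_integral_multc) auto
    also have "\<dots> = 1" using fD(6) ZZ by simp
    finally show "(\<integral>\<^sup>+z. ennreal (trunc_conv phi R f z) \<partial>lborel) = 1" .
  next
    have "(\<integral>\<^sup>+z. ennreal ((norm z)\<^sup>2 * trunc_conv phi R f z) \<partial>lborel)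
        = (\<integral>\<^sup>+z. ennreal ((norm z)\<^sup>2) * ennreal (trunc_conv phi R f z) \<partial>lborel)"
      by (intro nn_integral_cong ennreal_mult) (auto simp: tp(2))
    also have "\<dots> = ennreal (1 / Zv) * (\<integral>\<^sup>+z. ennreal (f z) * (\<integral>\<^sup>+w. ennreal (indicator (cball 0 R) w * phi w) * ennreal ((norm (fst z, snd z + w))\<^sup>2) \<partial>lborel) \<partial>lborel)"
      using tp(3)[of "\<lambda>z. ennreal ((norm z)\<^sup>2)"] unfolding Zv_def by simp
    also have "\<dots> \<le> ennreal (1 / Zv) * (\<integral>\<^sup>+z. ennreal (f z) * (\<integral>\<^sup>+w. ennreal (indicator (cball 0 R) w * phi w) * ennreal (2 * (norm z)\<^sup>2 + 2 * R\<^sup>2) \<partial>lborel) \<partial>lborel)"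
    proof -
      have pw: "ennreal (indicator (cball 0 R) w * phi w) * ennreal ((norm (fst z, snd z + w))\<^sup>2)
          \<le> ennreal (indicator (cball 0 R) w * phi w) * ennreal (2 * (norm z)\<^sup>2 + 2 * R\<^sup>2)" for z :: "'a \<times> 'a" and w :: 'a
      proof (cases "w \<in> cball 0 R")
        case True
        have "(norm (fst z, snd z + w))\<^sup>2 = (norm (fst z))\<^sup>2 + (norm (snd z + w))\<^sup>2" by (rule norm_pair_sq)
        also have "\<dots> \<le> (norm (fst z))\<^sup>2 + (2 * (norm (snd z))\<^sup>2 + 2 * (norm w)\<^sup>2)"
          using norm_add_sq_le[of "snd z" w] by simp
        also have "\<dots> \<le> 2 * ((norm (fst z))\<^sup>2 + (norm (snd z))\<^sup>2) + 2 * R\<^sup>2"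
        proof -
          have "(norm w)\<^sup>2 \<le> R\<^sup>2" using True by (intro power_mono) auto
          moreover have "0 \<le> (norm (fst z))\<^sup>2" by simp
          ultimately show ?thesis by (smt (verit))
        qed
        also have "(norm (fst z))\<^sup>2 + (norm (snd z))\<^sup>2 = (norm z)\<^sup>2" using norm_pair_sq[of "fst z" "snd z"] by simp
        finally have "(norm (fst z, snd z + w))\<^sup>2 \<le> 2 * (norm z)\<^sup>2 + 2 * R\<^sup>2" .
        thus ?thesis by (intro mult_left_mono ennreal_leI) auto
      next
        case False thus ?thesis by simp
      qed
      show ?thesis by (intro mult_left_mono nn_integral_mono pw) auto
    qed
    also have "\<dots> = ennreal (1 / Zv) * (\<integral>\<^sup>+z. ennreal (f z) * (ennreal Zv * ennreal (2 * (norm z)\<^sup>2 + 2 * R\<^sup>2)) \<partial>lborel)"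
    proof -
      have "(\<integral>\<^sup>+w. ennreal (indicator (cball 0 R) w * phi w) * ennreal (2 * (norm z)\<^sup>2 + 2 * R\<^sup>2) \<partial>lborel)
          = ennreal Zv * ennreal (2 * (norm z)\<^sup>2 + 2 * R\<^sup>2)" for z :: "'a \<times> 'a"
        by (subst nn_integral_multc) (auto simp: nk)
      thus ?thesis by simp
    qed
    also have "\<dots> < \<infinity>"
    proof -
      have i2: "integrable lborel (\<lambda>z. Zv * (2 * ((norm z)\<^sup>2 * f z) + 2 * R\<^sup>2 * f z))"
        using fD(3,5) by (intro integrable_mult_right Bochner_Integration.integrable_add) auto
      have "(\<integral>\<^sup>+z. ennreal (f z) * (ennreal Zv * ennreal (2 * (norm z)\<^sup>2 + 2 * R\<^sup>2)) \<partial>lborel)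
          = (\<integral>\<^sup>+z. ennreal (Zv * (2 * ((norm z)\<^sup>2 * f z) + 2 * R\<^sup>2 * f z)) \<partial>lborel)"
      proof (intro nn_integral_cong)
        fix z :: "'a \<times> 'a"
        have "ennreal (f z) * (ennreal Zv * ennreal (2 * (norm z)\<^sup>2 + 2 * R\<^sup>2))
            = ennreal (f z * (Zv * (2 * (norm z)\<^sup>2 + 2 * R\<^sup>2)))"
          using Z0 fD(2)[of z] by (simp add: ennreal_mult)
        also have "f z * (Zv * (2 * (norm z)\<^sup>2 + 2 * R\<^sup>2)) = Zv * (2 * ((norm z)\<^sup>2 * f z) + 2 * R\<^sup>2 * f z)"
          by (simp add: algebra_simps)
        finally show "ennreal (f z) * (ennreal Zv * ennreal (2 * (norm z)\<^sup>2 + 2 * R\<^sup>2))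
            = ennreal (Zv * (2 * ((norm z)\<^sup>2 * f z) + 2 * R\<^sup>2 * f z))" .
      qed
      also have "\<dots> = ennreal (\<integral>z. Zv * (2 * ((norm z)\<^sup>2 * f z) + 2 * R\<^sup>2 * f z) \<partial>lborel)"
        by (rule nn_integral_eq_integral[OF i2]) (use Z0 fD(2) in \<open>auto intro!: AE_I2\<close>)
      finally show ?thesis by (simp add: ennreal_mult_less_top)
    qed
    finally show "(\<integral>\<^sup>+z. ennreal ((norm z)\<^sup>2 * trunc_conv phi R f z) \<partial>lborel) < \<infinity>" .
  qed
qed

lemma nn_split:
  fixes H :: "'a::euclidean_space \<times> 'a \<Rightarrow> ennreal"
  assumes "H \<in> borel_measurable borel"
  shows "(\<integral>\<^sup>+z. H z \<partial>lborel) = (\<integral>\<^sup>+v. \<integral>\<^sup>+x. H (x, v) \<partial>lborel \<partial>lborel)"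
proof -
  have m: "H \<in> borel_measurable ((lborel :: 'a measure) \<Otimes>\<^sub>M (lborel :: 'a measure))"
    using assms by (simp add: lborel_prod)
  have "(\<integral>\<^sup>+v. \<integral>\<^sup>+x. H (x, v) \<partial>lborel \<partial>lborel) = integral\<^sup>N ((lborel :: 'a measure) \<Otimes>\<^sub>M (lborel :: 'a measure)) H"
    by (rule lborel_pair.nn_integral_snd[OF m])
  thus ?thesis by (simp add: lborel_prod)
qed

lemma shear_nn:
  fixes G g :: "'a::euclidean_space \<times> 'a \<Rightarrow> ennreal"
  assumes Gm[measurable]: "G \<in> borel_measurable borel" and gm[measurable]: "g \<in> borel_measurable borel"
  shows "(\<integral>\<^sup>+z. G z * g (fst z - h *\<^sub>R snd z, snd z) \<partial>lborel) = (\<integral>\<^sup>+z. G (fst z + h *\<^sub>R snd z, snd z) * g z \<partial>lborel)"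
proof -
  have c1: "(\<lambda>z::'a \<times> 'a. g (fst z - h *\<^sub>R snd z, snd z)) \<in> borel_measurable borel"
    by (rule meas_cont_comp[OF _ gm]) (intro continuous_intros)
  have c2: "(\<lambda>z::'a \<times> 'a. G (fst z + h *\<^sub>R snd z, snd z)) \<in> borel_measurable borel"
    by (rule meas_cont_comp[OF _ Gm]) (intro continuous_intros)
  have "(\<integral>\<^sup>+z. G z * g (fst z - h *\<^sub>R snd z, snd z) \<partial>lborel)
      = (\<integral>\<^sup>+v. \<integral>\<^sup>+x. G (x, v) * g (x - h *\<^sub>R v, v) \<partial>lborel \<partial>lborel)"
  proof -
    have mm: "(\<lambda>z. G z * g (fst z - h *\<^sub>R snd z, snd z)) \<in> borel_measurable borel" using c1 by measurable
    show ?thesis by (simp add: nn_split[OF mm])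
  qed
  also have "\<dots> = (\<integral>\<^sup>+v. \<integral>\<^sup>+x. G (x + h *\<^sub>R v, v) * g (x, v) \<partial>lborel \<partial>lborel)"
  proof (rule nn_integral_cong)
    fix v :: 'a
    have m: "(\<lambda>x. G (x, v) * g (x - h *\<^sub>R v, v)) \<in> borel_measurable borel"
    proof -
      have "(\<lambda>x. G (x, v)) \<in> borel_measurable borel"
        by (rule meas_cont_comp[OF _ Gm]) (intro continuous_intros)
      moreover have "(\<lambda>x. g (x - h *\<^sub>R v, v)) \<in> borel_measurable borel"
        by (rule meas_cont_comp[OF _ gm]) (intro continuous_intros)
      ultimately show ?thesis by measurable
    qed
    show "(\<integral>\<^sup>+x. G (x, v) * g (x - h *\<^sub>R v, v) \<partial>lborel) = (\<integral>\<^sup>+x. G (x + h *\<^sub>R v, v) * g (x, v) \<partial>lborel)"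
      using nn_translate[OF m, of "h *\<^sub>R v"] by (simp add: add.commute)
  qed
  also have "\<dots> = (\<integral>\<^sup>+z. G (fst z + h *\<^sub>R snd z, snd z) * g z \<partial>lborel)"
  proof -
    have mm: "(\<lambda>z. G (fst z + h *\<^sub>R snd z, snd z) * g z) \<in> borel_measurable borel" using c2 by measurable
    show ?thesis by (simp add: nn_split[OF mm])
  qed
  finally show ?thesis .
qed


lemma shear_coupling:
  fixes fb :: "'a::euclidean_space \<times> 'a \<Rightarrow> real"
  assumes fb: "fb \<in> P2a" and h: "0 < h"
  shows "(\<lambda>z. fb (fst z - h *\<^sub>R snd z, snd z)) \<in> P2a"
    and "Wh2 h fb (\<lambda>z. fb (fst z - h *\<^sub>R snd z, snd z)) = 0"
    and "\<And>Psi. Psi \<in> borel_measurable borel \<Longrightarrow>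
      (\<integral>\<^sup>+z. ennreal (Psi (snd z)) * ennreal (fb (fst z - h *\<^sub>R snd z, snd z)) \<partial>lborel)
      = (\<integral>\<^sup>+z. ennreal (Psi (snd z)) * ennreal (fb z) \<partial>lborel)"
proof -
  note fD = P2a_D[OF fb]
  note fm[measurable] = fD(1)
  define gs where "gs z = fb (fst z - h *\<^sub>R snd z, snd z)" for z
  define S where "S z = (fst z + h *\<^sub>R snd z, snd z)" for z :: "'a \<times> 'a"
  have gsm[measurable]: "gs \<in> borel_measurable borel" unfolding gs_def
    by (rule meas_cont_comp[OF _ fm]) (intro continuous_intros)
  have gsn: "0 \<le> gs z" for z unfolding gs_def using fD(2) by simp
  have efm: "(\<lambda>z. ennreal (fb z)) \<in> borel_measurable borel" by measurable
  have sh: "(\<integral>\<^sup>+z. G z * ennreal (gs z) \<partial>lborel) = (\<integral>\<^sup>+z. G (S z) * ennreal (fb z) \<partial>lborel)"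
    if Gm: "G \<in> borel_measurable borel" for G
    using shear_nn[OF Gm efm, of h] unfolding gs_def S_def by simp
  show "\<And>Psi. Psi \<in> borel_measurable borel \<Longrightarrow>
      (\<integral>\<^sup>+z. ennreal (Psi (snd z)) * ennreal (fb (fst z - h *\<^sub>R snd z, snd z)) \<partial>lborel)
      = (\<integral>\<^sup>+z. ennreal (Psi (snd z)) * ennreal (fb z) \<partial>lborel)"
  proof -
    fix Psi :: "'a \<Rightarrow> real" assume [measurable]: "Psi \<in> borel_measurable borel"
    have "(\<lambda>z::'a \<times> 'a. ennreal (Psi (snd z))) \<in> borel_measurable borel"
      by (rule meas_cont_comp[where f="\<lambda>v. ennreal (Psi v)"]) (intro continuous_intros, measurable)
    from sh[OF this] show "(\<integral>\<^sup>+z. ennreal (Psi (snd z)) * ennreal (fb (fst z - h *\<^sub>R snd z, snd z)) \<partial>lborel)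
      = (\<integral>\<^sup>+z. ennreal (Psi (snd z)) * ennreal (fb z) \<partial>lborel)" unfolding gs_def S_def by simp
  qed
  show "(\<lambda>z. fb (fst z - h *\<^sub>R snd z, snd z)) \<in> P2a"
    unfolding gs_def[symmetric]
  proof (rule P2a_I[OF gsm gsn])
    show "(\<integral>\<^sup>+z. ennreal (gs z) \<partial>lborel) = 1"
      using sh[of "\<lambda>_. 1"] fD(6) by simp
    have nm: "(\<lambda>z::'a \<times> 'a. ennreal ((norm z)\<^sup>2)) \<in> borel_measurable borel" by measurable
    have "(\<integral>\<^sup>+z. ennreal ((norm z)\<^sup>2 * gs z) \<partial>lborel) = (\<integral>\<^sup>+z. ennreal ((norm z)\<^sup>2) * ennreal (gs z) \<partial>lborel)"
      by (intro nn_integral_cong ennreal_mult) (auto simp: gsn)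
    also have "\<dots> = (\<integral>\<^sup>+z. ennreal ((norm (S z))\<^sup>2) * ennreal (fb z) \<partial>lborel)" by (rule sh[OF nm])
    also have "\<dots> \<le> (\<integral>\<^sup>+z. ennreal (2 + 2 * h\<^sup>2) * ennreal ((norm z)\<^sup>2 * fb z) \<partial>lborel)"
    proof (rule nn_integral_mono)
      fix z :: "'a \<times> 'a"
      obtain x v where z: "z = (x, v)" by (cases z)
      have "(norm (S z))\<^sup>2 = (norm (x + h *\<^sub>R v))\<^sup>2 + (norm v)\<^sup>2" unfolding S_def z by (simp add: norm_pair_sq)
      also have "\<dots> \<le> 2 * (norm x)\<^sup>2 + 2 * (norm (h *\<^sub>R v))\<^sup>2 + (norm v)\<^sup>2"
        using norm_add_sq_le[of x "h *\<^sub>R v"] by simp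
      also have "\<dots> = 2 * (norm x)\<^sup>2 + (2 * h\<^sup>2 + 1) * (norm v)\<^sup>2" by (simp add: power_mult_distrib algebra_simps)
      also have "\<dots> \<le> (2 + 2 * h\<^sup>2) * ((norm x)\<^sup>2 + (norm v)\<^sup>2)"
        by (simp add: algebra_simps)
      also have "\<dots> = (2 + 2 * h\<^sup>2) * (norm z)\<^sup>2" unfolding z by (simp add: norm_pair_sq)
      finally have le: "(norm (S z))\<^sup>2 \<le> (2 + 2 * h\<^sup>2) * (norm z)\<^sup>2" .
      have "ennreal ((norm (S z))\<^sup>2) * ennreal (fb z) = ennreal ((norm (S z))\<^sup>2 * fb z)"
        using fD(2)[of z] by (simp add: ennreal_mult)
      also have "\<dots> \<le> ennreal ((2 + 2 * h\<^sup>2) * (norm z)\<^sup>2 * fb z)"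
        using le fD(2)[of z] by (intro ennreal_leI mult_right_mono) auto
      also have "\<dots> = ennreal (2 + 2 * h\<^sup>2) * ennreal ((norm z)\<^sup>2 * fb z)"
        by (subst ennreal_mult[symmetric]) (use fD(2)[of z] in \<open>auto simp: mult_ac\<close>)
      finally show "ennreal ((norm (S z))\<^sup>2) * ennreal (fb z) \<le> ennreal (2 + 2 * h\<^sup>2) * ennreal ((norm z)\<^sup>2 * fb z)" .
    qed
    also have "\<dots> = ennreal (2 + 2 * h\<^sup>2) * (\<integral>\<^sup>+z. ennreal ((norm z)\<^sup>2 * fb z) \<partial>lborel)"
      by (rule nn_integral_cmult) measurable
    also have "\<dots> < \<infinity>" using fD(7) by (simp add: ennreal_mult_less_top)
    finally show "(\<integral>\<^sup>+z. ennreal ((norm z)\<^sup>2 * gs z) \<partial>lborel) < \<infinity>" .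
  qed
  define D where "D = density lborel (\<lambda>z. ennreal (fb z))"
  have sD: "sets D = sets borel" unfolding D_def by simp
  have spD: "space D = UNIV" unfolding D_def by simp
  have Sm: "S \<in> borel_measurable borel" unfolding S_def by (intro borel_measurable_continuous_onI continuous_intros)
  have Tm0: "(\<lambda>z. (z, S z)) \<in> borel_measurable borel" unfolding S_def by (intro borel_measurable_continuous_onI continuous_intros)
  have Tm: "(\<lambda>z. (z, S z)) \<in> measurable D borel" using Tm0 measurable_cong_sets[OF sD refl, of "borel :: (('a \<times> 'a) \<times> 'a \<times> 'a) measure"] by simp
  have pD: "prob_space D"
  proof (rule prob_spaceI)
    have "emeasure D (space D) = (\<integral>\<^sup>+z. ennreal (fb z) * indicator UNIV z \<partial>lborel)"
      unfolding D_def by (subst emeasure_density) auto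
    thus "emeasure D (space D) = 1" using fD(6) by simp
  qed
  define p where "p = distr D borel (\<lambda>z. (z, S z))"
  have pc: "p \<in> couplings fb gs"
    unfolding couplings_def mem_Collect_eq
  proof (intro conjI)
    show "sets p = sets borel" unfolding p_def by simp
    show "prob_space p" unfolding p_def by (rule prob_space.prob_space_distr[OF pD Tm])
    have fstm: "fst \<in> measurable (borel :: (('a \<times> 'a) \<times> 'a \<times> 'a) measure) borel"
      by (intro borel_measurable_continuous_onI continuous_intros)
    have sndm: "snd \<in> measurable (borel :: (('a \<times> 'a) \<times> 'a \<times> 'a) measure) borel"
      by (intro borel_measurable_continuous_onI continuous_intros)
    have "distr p borel fst = distr D borel (fst \<circ> (\<lambda>z. (z, S z)))"
      unfolding p_def by (rule distr_distr[OF fstm Tm])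
    also have "\<dots> = distr D borel (\<lambda>z. z)" by (simp add: o_def)
    also have "\<dots> = D" by (rule distr_id2) (simp add: sD)
    finally show "distr p borel fst = density lborel (\<lambda>z. ennreal (fb z))" unfolding D_def .
    have "distr p borel snd = distr D borel (snd \<circ> (\<lambda>z. (z, S z)))"
      unfolding p_def by (rule distr_distr[OF sndm Tm])
    also have "\<dots> = distr D borel S" by (simp add: o_def)
    also have "\<dots> = density lborel (\<lambda>z. ennreal (gs z))"
    proof (rule measure_eqI)
      show "sets (distr D borel S) = sets (density lborel (\<lambda>z. ennreal (gs z)))" by simp
      fix A assume "A \<in> sets (distr D borel S)"
      hence A[measurable]: "A \<in> sets borel" by simp
      have SmD: "S \<in> measurable D borel" using Sm measurable_cong_sets[OF sD refl, of "borel :: ('a \<times> 'a) measure"] by simp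
      have "emeasure (distr D borel S) A = emeasure D (S -` A \<inter> space D)"
        by (rule emeasure_distr[OF SmD A])
      also have "\<dots> = (\<integral>\<^sup>+z. ennreal (fb z) * indicator (S -` A \<inter> space D) z \<partial>lborel)"
      proof -
        have SA: "S -` A \<inter> space D \<in> sets D" by (rule measurable_sets[OF SmD A])
        hence SA': "S -` A \<inter> space D \<in> sets lborel" by (simp only: sD sets_lborel)
        have efm': "(\<lambda>z. ennreal (fb z)) \<in> borel_measurable lborel" using efm by simp
        show ?thesis using emeasure_density[OF efm' SA'] unfolding D_def .
      qed
      also have "\<dots> = (\<integral>\<^sup>+z. indicator A (S z) * ennreal (fb z) \<partial>lborel)"
        by (intro nn_integral_cong) (simp add: spD indicator_def)
      also have "\<dots> = (\<integral>\<^sup>+z. indicator A z * ennreal (gs z) \<partial>lborel)"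
        by (rule sh[symmetric]) measurable
      also have "\<dots> = emeasure (density lborel (\<lambda>z. ennreal (gs z))) A"
        by (subst emeasure_density) (auto simp: mult.commute)
      finally show "emeasure (distr D borel S) A = emeasure (density lborel (\<lambda>z. ennreal (gs z))) A" .
    qed
    finally show "distr p borel snd = density lborel (\<lambda>z. ennreal (gs z))" .
  qed
  have "(\<integral>\<^sup>+z. ennreal (cost_h h z) \<partial>p) = (\<integral>\<^sup>+z. ennreal (cost_h h (z, S z)) \<partial>D)"
  proof -
    have ce: "cost_h h = (\<lambda>z. (norm (snd (snd z) - snd (fst z)))\<^sup>2 + 12 * (norm ((1 / h) *\<^sub>R (fst (snd z) - fst (fst z)) - (1 / 2) *\<^sub>R (snd (snd z) + snd (fst z))))\<^sup>2)"
      by (rule ext) (simp add: cost_h_def split_beta')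
    have cm: "cost_h h \<in> borel_measurable (borel :: (('a \<times> 'a) \<times> 'a \<times> 'a) measure)"
      unfolding ce by (intro borel_measurable_continuous_onI continuous_intros)
    have cmE: "(\<lambda>z. ennreal (cost_h h z)) \<in> borel_measurable (borel :: (('a \<times> 'a) \<times> 'a \<times> 'a) measure)"
      using cm by measurable
    show ?thesis unfolding p_def by (rule nn_integral_distr[OF Tm]) (use cmE in simp)
  qed
  also have "\<dots> = (\<integral>\<^sup>+z. 0 \<partial>D)"
  proof (rule nn_integral_cong)
    fix z :: "'a \<times> 'a"
    obtain x v where z: "z = (x, v)" by (cases z)
    have "cost_h h (z, S z) = 0" unfolding z S_def cost_h_def using h
      by (simp add: scaleR_add_right[symmetric])
    thus "ennreal (cost_h h (z, S z)) = 0" by simp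
  qed
  also have "\<dots> = 0" by simp
  finally have "(\<integral>\<^sup>+z. ennreal (cost_h h z) \<partial>p) = 0" .
  hence "Wh2 h fb gs \<le> 0" unfolding Wh2_def by (metis INF_lower pc)
  thus "Wh2 h fb (\<lambda>z. fb (fst z - h *\<^sub>R snd z, snd z)) = 0" unfolding gs_def by simp
qed

lemma taylor2:
  fixes Psi :: "'a::euclidean_space \<Rightarrow> real" and DPsi :: "'a \<Rightarrow> 'a" and D2Psi :: "'a \<Rightarrow> 'a \<Rightarrow>\<^sub>L 'a"
  assumes grad: "\<And>v. (Psi has_derivative (\<lambda>u. DPsi v \<bullet> u)) (at v)"
    and hess: "\<And>v. (DPsi has_derivative blinfun_apply (D2Psi v)) (at v)"
    and bd: "\<And>v. norm (D2Psi v) \<le> M"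
  shows "Psi (v + w) \<le> Psi v + DPsi v \<bullet> w + M / 2 * (norm w)\<^sup>2"
proof -
  have lip: "norm (DPsi a - DPsi b) \<le> M * norm (a - b)" for a b
  proof (rule differentiable_bound[where S=UNIV and f'="\<lambda>x. blinfun_apply (D2Psi x)"])
    show "convex (UNIV :: 'a set)" by simp
    show "(DPsi has_derivative blinfun_apply (D2Psi x)) (at x within UNIV)" for x using hess[of x] by simp
    show "onorm (blinfun_apply (D2Psi x)) \<le> M" for x using bd[of x] by (simp add: norm_blinfun.rep_eq)
  qed auto
  define g where "g t = Psi (v + t *\<^sub>R w) - t * (DPsi v \<bullet> w) - M / 2 * t\<^sup>2 * (norm w)\<^sup>2" for t :: real
  have "g 1 \<le> g 0"
  proof (rule DERIV_nonpos_imp_nonincreasing[of 0 1 g])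
    fix t :: real assume t0: "0 \<le> t" and t1: "t \<le> 1"
    let ?d = "DPsi (v + t *\<^sub>R w) \<bullet> w - DPsi v \<bullet> w - M * t * (norm w)\<^sup>2"
    have dPsi: "((\<lambda>t. Psi (v + t *\<^sub>R w)) has_real_derivative DPsi (v + t *\<^sub>R w) \<bullet> w) (at t)"
    proof -
      have l: "((\<lambda>t. v + t *\<^sub>R w) has_derivative (\<lambda>h. h *\<^sub>R w)) (at t)"
        by (auto intro!: derivative_eq_intros)
      have "((\<lambda>t. Psi (v + t *\<^sub>R w)) has_derivative (\<lambda>h. DPsi (v + t *\<^sub>R w) \<bullet> (h *\<^sub>R w))) (at t)"
        using diff_chain_at[OF l grad[of "v + t *\<^sub>R w"]] by (simp add: o_def)
      moreover have "(\<lambda>h. DPsi (v + t *\<^sub>R w) \<bullet> (h *\<^sub>R w)) = (*) (DPsi (v + t *\<^sub>R w) \<bullet> w)"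
        by (auto simp: mult.commute)
      ultimately show ?thesis by (simp add: has_field_derivative_def)
    qed
    have "(g has_real_derivative ?d) (at t)"
      unfolding g_def by (auto intro!: derivative_eq_intros dPsi simp: power2_eq_square algebra_simps)
    moreover have "?d \<le> 0"
    proof -
      have "DPsi (v + t *\<^sub>R w) \<bullet> w - DPsi v \<bullet> w = (DPsi (v + t *\<^sub>R w) - DPsi v) \<bullet> w"
        by (simp add: inner_diff_left)
      also have "\<dots> \<le> norm (DPsi (v + t *\<^sub>R w) - DPsi v) * norm w" by (rule norm_cauchy_schwarz)
      also have "\<dots> \<le> (M * norm (t *\<^sub>R w)) * norm w"
        using lip[of "v + t *\<^sub>R w" v] by (intro mult_right_mono) auto
      also have "\<dots> = M * t * (norm w)\<^sup>2" using t0 by (simp add: power2_eq_square)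
      finally show ?thesis by simp
    qed
    ultimately show "\<exists>y. (g has_real_derivative y) (at t) \<and> y \<le> 0" by blast
  qed simp
  thus ?thesis unfolding g_def by simp
qed

lemma psi_conv_bound:
  fixes phi :: "'a::euclidean_space \<Rightarrow> real" and f :: "'a \<times> 'a \<Rightarrow> real"
    and Psi :: "'a \<Rightarrow> real" and DPsi :: "'a \<Rightarrow> 'a" and D2Psi :: "'a \<Rightarrow> 'a \<Rightarrow>\<^sub>L 'a"
  assumes fhk: "frac_heat_kernel s t phi" and R: "0 < R"
    and Z: "0 < (\<integral>w. indicator (cball 0 R) w * phi w \<partial>lborel)"
    and f: "f \<in> P2a"
    and Psi_nonneg: "\<And>v. 0 \<le> Psi v"
    and grad: "\<And>v. (Psi has_derivative (\<lambda>u. DPsi v \<bullet> u)) (at v)"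
    and hess: "\<And>v. (DPsi has_derivative blinfun_apply (D2Psi v)) (at v)"
    and bd: "\<And>v. norm (D2Psi v) \<le> M" and M0: "0 \<le> M"
  shows "(\<integral>\<^sup>+z. ennreal (Psi (snd z)) * ennreal (trunc_conv phi R f z) \<partial>lborel)
      \<le> (\<integral>\<^sup>+z. ennreal (Psi (snd z)) * ennreal (f z) \<partial>lborel)
        + ennreal (M / 2 * ((\<integral>w. indicator (cball 0 R) w * phi w * (norm w)\<^sup>2 \<partial>lborel) / (\<integral>w. indicator (cball 0 R) w * phi w \<partial>lborel)))"
proof -
  note fb = fhk_basic[OF fhk]
  note pm[measurable] = fb(2)
  note fD = P2a_D[OF f]
  note fm[measurable] = fD(1)
  define Zv where "Zv = (\<integral>w. indicator (cball 0 R) w * phi w \<partial>lborel)"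
  define M2 where "M2 = (\<integral>w. indicator (cball 0 R) w * phi w * (norm w)\<^sup>2 \<partial>lborel)"
  define k where "k w = indicator (cball 0 R) w * phi w" for w :: 'a
  have Z0: "0 < Zv" using Z unfolding Zv_def .
  have kn: "0 \<le> k w" for w unfolding k_def using fb(3)[of w] by simp
  have km[measurable]: "k \<in> borel_measurable borel" unfolding k_def by measurable
  have Psic: "continuous_on UNIV Psi"
    using has_derivative_continuous[OF grad] by (simp add: continuous_at_imp_continuous_on)
  have Psim[measurable]: "Psi \<in> borel_measurable borel" by (rule borel_measurable_continuous_onI[OF Psic])
  have Gm: "(\<lambda>z::'a \<times> 'a. ennreal (Psi (snd z))) \<in> borel_measurable borel"
    by (rule meas_cont_comp[where f="\<lambda>v. ennreal (Psi v)"]) (intro continuous_intros, measurable)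
  have psnd[measurable]: "(\<lambda>z::'a \<times> 'a. Psi (snd z)) \<in> borel_measurable borel"
    by (rule meas_cont_comp[OF _ Psim]) (intro continuous_intros)
  have ff: "(\<integral>\<^sup>+z. ennreal (f z) \<partial>lborel) < \<infinity>" using fD(6) by simp
  note tp = trunc_conv_props[OF fb(2) fb(3) fb(1) Z fD(1) fD(2) ff]
  have intk: "integrable lborel (\<lambda>w. k w * T w)" if "T \<in> borel_measurable borel" "\<And>w. w \<in> cball 0 R \<Longrightarrow> \<bar>T w\<bar> \<le> B" for T and B :: real
  proof (rule Bochner_Integration.integrable_bound[where f="\<lambda>w. \<bar>B\<bar> * phi w"])
    show "integrable lborel (\<lambda>w. \<bar>B\<bar> * phi w)" using fb(1) by simp
    show "(\<lambda>w. k w * T w) \<in> borel_measurable lborel" using that(1) by simp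
    show "AE w in lborel. norm (k w * T w) \<le> norm (\<bar>B\<bar> * phi w)"
    proof (intro AE_I2)
      fix w :: 'a
      show "norm (k w * T w) \<le> norm (\<bar>B\<bar> * phi w)"
      proof (cases "w \<in> cball 0 R")
        case True
        have "\<bar>T w\<bar> \<le> \<bar>B\<bar>" using that(2)[OF True] by simp
        hence "phi w * \<bar>T w\<bar> \<le> phi w * \<bar>B\<bar>" using fb(3)[of w] by (intro mult_left_mono) auto
        thus ?thesis using True fb(3)[of w] by (simp add: k_def abs_mult mult.commute)
      next
        case False thus ?thesis by (simp add: k_def)
      qed
    qed
  qed
  have inner: "(\<integral>\<^sup>+w. ennreal (k w) * ennreal (Psi (v + w)) \<partial>lborel) \<le> ennreal (Zv * Psi v + M / 2 * M2)" for v
  proof -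
    define T where "T w = Psi v + DPsi v \<bullet> w + M / 2 * (norm w)\<^sup>2" for w
    have tay: "Psi (v + w) \<le> T w" for w unfolding T_def by (rule taylor2[OF grad hess bd])
    have Tm[measurable]: "T \<in> borel_measurable borel" unfolding T_def by measurable
    have Tb: "\<bar>T w\<bar> \<le> \<bar>Psi v\<bar> + norm (DPsi v) * R + \<bar>M\<bar> / 2 * R\<^sup>2" if "w \<in> cball 0 R" for w
    proof -
      have nw: "norm w \<le> R" using that by simp
      have "\<bar>DPsi v \<bullet> w\<bar> \<le> norm (DPsi v) * norm w" by (rule Cauchy_Schwarz_ineq2)
      also have "\<dots> \<le> norm (DPsi v) * R" using nw by (intro mult_left_mono) auto
      finally have a: "\<bar>DPsi v \<bullet> w\<bar> \<le> norm (DPsi v) * R" .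
      have "(norm w)\<^sup>2 \<le> R\<^sup>2" using nw by (intro power_mono) auto
      hence b: "\<bar>M / 2 * (norm w)\<^sup>2\<bar> \<le> \<bar>M\<bar> / 2 * R\<^sup>2" using M0 by (simp add: abs_mult mult_left_mono)
      show ?thesis unfolding T_def using a b by (smt (verit))
    qed
    have iT: "integrable lborel (\<lambda>w. k w * T w)" by (rule intk[OF Tm Tb])
    have i1: "integrable lborel (\<lambda>w. k w * 1)" by (rule intk[of _ 1]) auto
    have i2: "integrable lborel (\<lambda>w. k w * (DPsi v \<bullet> w))"
      by (rule intk[where B="norm (DPsi v) * R"]) (auto intro!: order_trans[OF Cauchy_Schwarz_ineq2] mult_left_mono)
    have i3: "integrable lborel (\<lambda>w. k w * (norm w)\<^sup>2)"
      by (rule intk[where B="R\<^sup>2"]) (auto intro!: power_mono)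
    have "(\<integral>\<^sup>+w. ennreal (k w) * ennreal (Psi (v + w)) \<partial>lborel) \<le> (\<integral>\<^sup>+w. ennreal (k w * T w) \<partial>lborel)"
    proof (rule nn_integral_mono)
      fix w
      have "ennreal (k w) * ennreal (Psi (v + w)) = ennreal (k w * Psi (v + w))"
        using kn[of w] Psi_nonneg[of "v + w"] by (simp add: ennreal_mult)
      also have "\<dots> \<le> ennreal (k w * T w)" using tay[of w] kn[of w] by (intro ennreal_leI mult_left_mono) auto
      finally show "ennreal (k w) * ennreal (Psi (v + w)) \<le> ennreal (k w * T w)" .
    qed
    also have "\<dots> = ennreal (\<integral>w. k w * T w \<partial>lborel)"
    proof (rule nn_integral_eq_integral[OF iT], intro AE_I2)
      fix w show "0 \<le> k w * T w" using kn[of w] Psi_nonneg[of "v + w"] tay[of w] by simp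
    qed
    also have "(\<integral>w. k w * T w \<partial>lborel) = Zv * Psi v + M / 2 * M2"
    proof -
      have "(\<integral>w. k w * T w \<partial>lborel) = (\<integral>w. Psi v * (k w * 1) + (k w * (DPsi v \<bullet> w)) + M / 2 * (k w * (norm w)\<^sup>2) \<partial>lborel)"
        unfolding T_def by (rule Bochner_Integration.integral_cong) (auto simp: algebra_simps)
      also have "\<dots> = Psi v * (\<integral>w. k w * 1 \<partial>lborel) + (\<integral>w. k w * (DPsi v \<bullet> w) \<partial>lborel) + M / 2 * (\<integral>w. k w * (norm w)\<^sup>2 \<partial>lborel)"
        using i1 i2 i3 by simp
      also have "(\<integral>w. k w * (DPsi v \<bullet> w) \<partial>lborel) = 0"
      proof -
        have "(\<integral>w. k w * (DPsi v \<bullet> w) \<partial>lborel) = (\<integral>w. phi w * ((DPsi v \<bullet> w) * indicator (cball 0 R) w) \<partial>lborel)"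
          unfolding k_def by (rule Bochner_Integration.integral_cong) (auto simp: mult_ac)
        also have "\<dots> = 0" by (rule fhk_odd_moment[OF fhk R])
        finally show ?thesis .
      qed
      also have "(\<integral>w. k w * 1 \<partial>lborel) = Zv" unfolding k_def Zv_def by simp
      also have "(\<integral>w. k w * (norm w)\<^sup>2 \<partial>lborel) = M2" unfolding k_def M2_def by simp
      finally show ?thesis by simp
    qed
    finally show ?thesis .
  qed
  have "(\<integral>\<^sup>+z. ennreal (Psi (snd z)) * ennreal (trunc_conv phi R f z) \<partial>lborel)
      = ennreal (1 / Zv) * (\<integral>\<^sup>+z. ennreal (f z) * (\<integral>\<^sup>+w. ennreal (k w) * ennreal (Psi (snd z + w)) \<partial>lborel) \<partial>lborel)"
    using tp(3)[OF Gm] unfolding Zv_def k_def by simp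
  also have "\<dots> \<le> ennreal (1 / Zv) * (\<integral>\<^sup>+z. ennreal (f z) * ennreal (Zv * Psi (snd z) + M / 2 * M2) \<partial>lborel)"
    by (intro mult_left_mono nn_integral_mono inner) auto
  also have "\<dots> = (\<integral>\<^sup>+z. ennreal (1 / Zv) * (ennreal (f z) * ennreal (Zv * Psi (snd z) + M / 2 * M2)) \<partial>lborel)"
    by (rule nn_integral_cmult[symmetric]) measurable
  also have "\<dots> = (\<integral>\<^sup>+z. ennreal (Psi (snd z)) * ennreal (f z) + ennreal (M / 2 * (M2 / Zv)) * ennreal (f z) \<partial>lborel)"
  proof (rule nn_integral_cong)
    fix z :: "'a \<times> 'a"
    have M20: "0 \<le> M2" unfolding M2_def by (rule integral_nonneg_AE) (use fb(3) in \<open>auto intro!: AE_I2\<close>)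
    define a where "a = Zv * Psi (snd z) + M / 2 * M2"
    define c where "c = M / 2 * (M2 / Zv)"
    have a0: "0 \<le> a" unfolding a_def using Z0 Psi_nonneg[of "snd z"] M0 M20 by simp
    have c0: "0 \<le> c" unfolding c_def using Z0 M0 M20 by simp
    have f0: "0 \<le> f z" by (rule fD(2))
    have p0: "0 \<le> Psi (snd z)" by (rule Psi_nonneg)
    have "ennreal (1 / Zv) * (ennreal (f z) * ennreal a) = ennreal (1 / Zv) * ennreal (f z * a)"
      by (subst ennreal_mult[OF f0 a0]) (rule refl)
    also have "\<dots> = ennreal (1 / Zv * (f z * a))"
      by (rule ennreal_mult[symmetric]) (use Z0 f0 a0 in auto)
    also have "1 / Zv * (f z * a) = Psi (snd z) * f z + c * f z"
      unfolding a_def c_def using Z0 by (simp add: field_simps)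
    also have "ennreal (Psi (snd z) * f z + c * f z) = ennreal (Psi (snd z) * f z) + ennreal (c * f z)"
      using f0 c0 p0 by (intro ennreal_plus) auto
    also have "\<dots> = ennreal (Psi (snd z)) * ennreal (f z) + ennreal c * ennreal (f z)"
      by (simp only: ennreal_mult[OF p0 f0] ennreal_mult[OF c0 f0])
    finally have "ennreal (1 / Zv) * (ennreal (f z) * ennreal a) = ennreal (Psi (snd z)) * ennreal (f z) + ennreal c * ennreal (f z)" .
    thus "ennreal (1 / Zv) * (ennreal (f z) * ennreal (Zv * Psi (snd z) + M / 2 * M2))
        = ennreal (Psi (snd z)) * ennreal (f z) + ennreal (M / 2 * (M2 / Zv)) * ennreal (f z)"
      unfolding a_def c_def .
  qed
  also have "\<dots> = (\<integral>\<^sup>+z. ennreal (Psi (snd z)) * ennreal (f z) \<partial>lborel) + ennreal (M / 2 * (M2 / Zv)) * (\<integral>\<^sup>+z. ennreal (f z) \<partial>lborel)"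
    by (subst nn_integral_add) (use Gm in \<open>measurable, measurable, simp add: nn_integral_cmult\<close>)
  also have "\<dots> = (\<integral>\<^sup>+z. ennreal (Psi (snd z)) * ennreal (f z) \<partial>lborel) + ennreal (M / 2 * (M2 / Zv))"
    using fD(6) by simp
  finally show ?thesis unfolding Zv_def M2_def .
qed

lemma box_P2a:
  fixes c :: "'a::euclidean_space \<times> 'a"
  shows "indicator (cbox c (c + One)) \<in> (P2a :: ('a \<times> 'a \<Rightarrow> real) set)"
proof (rule P2a_I)
  show "indicator (cbox c (c + One)) \<in> borel_measurable borel" by (simp add: borel_closed)
  show "\<And>z. 0 \<le> (indicator (cbox c (c + One)) z :: real)" by simp
  have "(\<integral>\<^sup>+z. ennreal (indicator (cbox c (c + One)) z) \<partial>lborel) = emeasure lborel (cbox c (c + One))"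
    by (simp add: ennreal_indicator nn_integral_indicator borel_closed)
  also have "\<dots> = 1" by (simp add: emeasure_lborel_cbox_eq inner_simps)
  finally show "(\<integral>\<^sup>+z. ennreal (indicator (cbox c (c + One)) z) \<partial>lborel) = 1" .
  obtain B where B: "\<And>z. z \<in> cbox c (c + One) \<Longrightarrow> norm z \<le> B"
    using bounded_cbox[of c "c + One"] unfolding bounded_iff by blast
  have "(\<integral>\<^sup>+z. ennreal ((norm z)\<^sup>2 * indicator (cbox c (c + One)) z) \<partial>lborel)
      \<le> (\<integral>\<^sup>+z. ennreal (B\<^sup>2) * indicator (cbox c (c + One)) z \<partial>lborel)"
  proof (rule nn_integral_mono)
    fix z :: "'a \<times> 'a"
    show "ennreal ((norm z)\<^sup>2 * indicator (cbox c (c + One)) z) \<le> ennreal (B\<^sup>2) * indicator (cbox c (c + One)) z"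
    proof (cases "z \<in> cbox c (c + One)")
      case True
      have "(norm z)\<^sup>2 \<le> B\<^sup>2" using B[OF True] by (intro power_mono) auto
      thus ?thesis using True by (simp add: ennreal_leI)
    qed simp
  qed
  also have "\<dots> = ennreal (B\<^sup>2) * emeasure lborel (cbox c (c + One))"
    by (simp add: nn_integral_cmult_indicator borel_closed)
  also have "\<dots> < \<infinity>" by (simp add: emeasure_lborel_cbox_eq inner_simps)
  finally show "(\<integral>\<^sup>+z. ennreal ((norm z)\<^sup>2 * indicator (cbox c (c + One)) z) \<partial>lborel) < \<infinity>" .
qed

lemma P2a_two: "\<exists>g1 g2. g1 \<in> (P2a :: ('a::euclidean_space \<times> 'a \<Rightarrow> real) set) \<and> g2 \<in> P2a \<and> \<not> (AE z in lborel. g1 z = g2 z)"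
proof (intro exI conjI)
  let ?c = "(2::real) *\<^sub>R (One :: 'a \<times> 'a)"
  let ?e1 = "indicator (cbox 0 (0 + One)) :: 'a \<times> 'a \<Rightarrow> real"
  let ?e2 = "indicator (cbox ?c (?c + One)) :: 'a \<times> 'a \<Rightarrow> real"
  show "?e1 \<in> P2a" by (rule box_P2a)
  show "?e2 \<in> P2a" by (rule box_P2a)
  show "\<not> (AE z in lborel. ?e1 z = ?e2 z)"
  proof
    assume ae: "AE z in lborel. ?e1 z = ?e2 z"
    have disj: "?e1 z * ?e2 z = 0" for z
    proof (cases "z \<in> cbox 0 (0 + One) \<and> z \<in> cbox ?c (?c + One)")
      case True
      obtain b :: "'a \<times> 'a" where b: "b \<in> Basis" using nonempty_Basis by blast
      have "z \<bullet> b \<le> 1" using True b by (auto simp: mem_box inner_simps)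
      moreover have "2 \<le> z \<bullet> b" using True b by (auto simp: mem_box inner_simps)
      ultimately show ?thesis by simp
    next
      case False thus ?thesis by auto
    qed
    have "1 = (\<integral>\<^sup>+z. ennreal (?e1 z) \<partial>lborel)" using P2a_D(6)[OF box_P2a[of 0]] by simp
    also have "\<dots> = (\<integral>\<^sup>+z. ennreal (?e1 z * ?e2 z) \<partial>lborel)"
    proof (rule nn_integral_cong_AE)
      show "AE z in lborel. ennreal (?e1 z) = ennreal (?e1 z * ?e2 z)"
        using ae by eventually_elim (simp add: indicator_def)
    qed
    also have "\<dots> = 0" by (simp only: disj) simp
    finally show False by simp
  qed
qed

lemma Z_pos:
  fixes phi :: "'a::euclidean_space \<Rightarrow> real" and fp fnew :: "'a \<times> 'a \<Rightarrow> real"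
  assumes pn: "\<And>w. 0 \<le> phi w" and h: "0 < h"
    and uniq: "\<forall>g\<in>P2a. JKO_functional h Psi (trunc_conv phi R fp) g \<le> JKO_functional h Psi (trunc_conv phi R fp) fnew
              \<longrightarrow> (AE z in lborel. g z = fnew z)"
  shows "0 < (\<integral>w. indicator (cball 0 R) w * phi w \<partial>lborel)"
proof (rule ccontr)
  assume "\<not> ?thesis"
  moreover have "0 \<le> (\<integral>w. indicator (cball 0 R) w * phi w \<partial>lborel)"
    by (rule integral_nonneg_AE) (use pn in \<open>auto intro!: AE_I2\<close>)
  ultimately have Z0: "(\<integral>w. indicator (cball 0 R) w * phi w \<partial>lborel) = 0" by simp
  have tc0: "trunc_conv phi R fp = (\<lambda>_. 0)" by (rule ext) (simp add: trunc_conv_eq Z0)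
  have cpl: "couplings (\<lambda>_. 0) g = {}" for g :: "'a \<times> 'a \<Rightarrow> real"
  proof (rule ccontr)
    assume "couplings (\<lambda>_. 0) g \<noteq> {}"
    then obtain p where p: "p \<in> couplings (\<lambda>_. 0) g" by blast
    hence ps: "prob_space p" and sp: "sets p = sets borel" and d: "distr p borel fst = density lborel (\<lambda>z. ennreal 0)"
      unfolding couplings_def by auto
    have fm: "fst \<in> measurable p (borel :: ('a \<times> 'a) measure)"
      using measurable_cong_sets[OF sp refl, of "borel :: ('a \<times> 'a) measure"]
      by (simp add: borel_measurable_continuous_onI continuous_on_fst continuous_on_id)
    have "prob_space (distr p borel fst)" by (rule prob_space.prob_space_distr[OF ps fm])
    hence "emeasure (distr p borel fst) (space (distr p borel fst)) = 1" by (rule prob_space.emeasure_space_1)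
    moreover have "emeasure (density lborel (\<lambda>z::'a \<times> 'a. ennreal 0)) UNIV = 0"
      by (simp add: emeasure_density)
    ultimately show False using d by simp
  qed
  have top: "JKO_functional h Psi (trunc_conv phi R fp) g = \<top>" for g :: "'a \<times> 'a \<Rightarrow> real"
  proof -
    have "Wh2 h (trunc_conv phi R fp) g = \<top>" unfolding tc0 Wh2_def cpl by simp
    moreover have "ennreal (1 / (2 * h)) \<noteq> 0" using h by simp
    ultimately show ?thesis unfolding JKO_functional_def by simp
  qed
  obtain g1 g2 :: "'a \<times> 'a \<Rightarrow> real" where g: "g1 \<in> P2a" "g2 \<in> P2a" "\<not> (AE z in lborel. g1 z = g2 z)" using P2a_two by blast
  have "AE z in lborel. g1 z = fnew z" using uniq g(1) top by simp
  moreover have "AE z in lborel. g2 z = fnew z" using uniq g(2) top by simp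
  ultimately have "AE z in lborel. g1 z = g2 z" by eventually_elim simp
  thus False using g(3) by simp
qed

lemma jko_step:
  fixes phi :: "'a::euclidean_space \<Rightarrow> real" and fp fnew :: "'a \<times> 'a \<Rightarrow> real"
    and Psi :: "'a \<Rightarrow> real" and DPsi :: "'a \<Rightarrow> 'a" and D2Psi :: "'a \<Rightarrow> 'a \<Rightarrow>\<^sub>L 'a"
  assumes fhk: "frac_heat_kernel s h phi" and R: "0 < R" and h: "0 < h"
    and fp: "fp \<in> P2a" and fnew: "fnew \<in> P2a"
    and min: "\<forall>g\<in>P2a. JKO_functional h Psi (trunc_conv phi R fp) fnew \<le> JKO_functional h Psi (trunc_conv phi R fp) g"
    and uniq: "\<forall>g\<in>P2a. JKO_functional h Psi (trunc_conv phi R fp) g \<le> JKO_functional h Psi (trunc_conv phi R fp) fnew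
              \<longrightarrow> (AE z in lborel. g z = fnew z)"
    and Psi_nonneg: "\<And>v. 0 \<le> Psi v"
    and grad: "\<And>v. (Psi has_derivative (\<lambda>u. DPsi v \<bullet> u)) (at v)"
    and hess: "\<And>v. (DPsi has_derivative blinfun_apply (D2Psi v)) (at v)"
    and bd: "\<And>v. norm (D2Psi v) \<le> M" and M0: "0 \<le> M"
  shows "ennreal (1 / (2 * h)) * Wh2 h (trunc_conv phi R fp) fnew + (\<integral>\<^sup>+z. ennreal (Psi (snd z) * fnew z) \<partial>lborel)
     \<le> (\<integral>\<^sup>+z. ennreal (Psi (snd z) * fp z) \<partial>lborel)
        + ennreal (M / 2 * ((\<integral>w. indicator (cball 0 R) w * phi w * (norm w)\<^sup>2 \<partial>lborel) / (\<integral>w. indicator (cball 0 R) w * phi w \<partial>lborel)))"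
proof -
  note fb = fhk_basic[OF fhk]
  have Z: "0 < (\<integral>w. indicator (cball 0 R) w * phi w \<partial>lborel)" by (rule Z_pos[OF fb(3) h uniq])
  define fbar where "fbar = trunc_conv phi R fp"
  have fbP: "fbar \<in> P2a" unfolding fbar_def by (rule tc_P2a[OF fb(2) fb(3) fb(1) Z fp])
  note sc = shear_coupling[OF fbP h]
  define gs where "gs z = fbar (fst z - h *\<^sub>R snd z, snd z)" for z
  have gsP: "gs \<in> P2a" unfolding gs_def by (rule sc(1))
  have W0: "Wh2 h fbar gs = 0" unfolding gs_def by (rule sc(2))
  have Psic: "continuous_on UNIV Psi"
    using has_derivative_continuous[OF grad] by (simp add: continuous_at_imp_continuous_on)
  have Psim: "Psi \<in> borel_measurable borel" by (rule borel_measurable_continuous_onI[OF Psic])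
  have split: "(\<integral>\<^sup>+z. ennreal (Psi (snd z) * g z) \<partial>lborel) = (\<integral>\<^sup>+z. ennreal (Psi (snd z)) * ennreal (g z) \<partial>lborel)"
    if "g \<in> P2a" for g
    using P2a_D(2)[OF that] Psi_nonneg by (intro nn_integral_cong) (simp add: ennreal_mult)
  have "ennreal (1 / (2 * h)) * Wh2 h fbar fnew + (\<integral>\<^sup>+z. ennreal (Psi (snd z) * fnew z) \<partial>lborel)
      = JKO_functional h Psi fbar fnew" unfolding JKO_functional_def by simp
  also have "\<dots> \<le> JKO_functional h Psi fbar gs" using min gsP unfolding fbar_def by blast
  also have "\<dots> = (\<integral>\<^sup>+z. ennreal (Psi (snd z) * gs z) \<partial>lborel)" unfolding JKO_functional_def W0 by simp
  also have "\<dots> = (\<integral>\<^sup>+z. ennreal (Psi (snd z)) * ennreal (gs z) \<partial>lborel)" by (rule split[OF gsP])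
  also have "\<dots> = (\<integral>\<^sup>+z. ennreal (Psi (snd z)) * ennreal (fbar z) \<partial>lborel)" unfolding gs_def by (rule sc(3)[OF Psim])
  also have "\<dots> \<le> (\<integral>\<^sup>+z. ennreal (Psi (snd z)) * ennreal (fp z) \<partial>lborel)
        + ennreal (M / 2 * ((\<integral>w. indicator (cball 0 R) w * phi w * (norm w)\<^sup>2 \<partial>lborel) / (\<integral>w. indicator (cball 0 R) w * phi w \<partial>lborel)))"
    unfolding fbar_def by (rule psi_conv_bound[OF fhk R Z fp Psi_nonneg grad hess bd M0])
  also have "(\<integral>\<^sup>+z. ennreal (Psi (snd z)) * ennreal (fp z) \<partial>lborel) = (\<integral>\<^sup>+z. ennreal (Psi (snd z) * fp z) \<partial>lborel)"
    by (rule split[OF fp, symmetric])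
  finally show ?thesis unfolding fbar_def .
qed

theorem lemma4p1:
  fixes s T :: real
    and Psi :: "'a::euclidean_space \<Rightarrow> real"
    and DPsi :: "'a \<Rightarrow> 'a"
    and D2Psi :: "'a \<Rightarrow> 'a \<Rightarrow>\<^sub>L 'a"
    and f0 :: "'a \<times> 'a \<Rightarrow> real"
  assumes s: "0 < s" "s \<le> 1"
    and T: "0 < T"
    and Psi_nonneg: "\<And>v. 0 \<le> Psi v"
    and Psi_grad: "\<And>v. (Psi has_derivative (\<lambda>u. DPsi v \<bullet> u)) (at v)"
    and Psi_hess: "\<And>v. (DPsi has_derivative blinfun_apply (D2Psi v)) (at v)"
    and Psi_C11: "\<exists>L. L-lipschitz_on UNIV DPsi"
    and Psi_C21: "\<exists>L. L-lipschitz_on UNIV D2Psi"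
    and Psi_hess_bdd: "bounded (range D2Psi)"
    and f0: "f0 \<in> P2a"
    and f0_Psi: "integrable lborel (\<lambda>z. Psi (snd z) * f0 z)"
  shows "\<exists>C>0. \<forall>N::nat. \<forall>R::real. \<forall>phi :: 'a \<Rightarrow> real.
           \<forall>fbar f :: nat \<Rightarrow> ('a \<times> 'a \<Rightarrow> real).
    let h = T / real N in
    N \<ge> 1 \<longrightarrow> 0 < R \<longrightarrow> frac_heat_kernel s h phi \<longrightarrow>
    f 0 = f0 \<longrightarrow>
    (\<forall>n\<in>{1..N}. fbar n = trunc_conv phi R (f (n - 1))
        \<and> f n \<in> P2a
        \<and> (\<forall>g\<in>P2a. JKO_functional h Psi (fbar n) (f n) \<le> JKO_functional h Psi (fbar n) g)
        \<and> (\<forall>g\<in>P2a. JKO_functional h Psi (fbar n) g \<le> JKO_functional h Psi (fbar n) (f n)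
              \<longrightarrow> (AE z in lborel. g z = f n z))) \<longrightarrow>
    (\<Sum>n=1..N. Wh2 h (fbar n) (f n))
      \<le> ennreal (C * (h * (\<integral>z. Psi (snd z) * f0 z \<partial>lborel)
            + T * (SUP v. norm (D2Psi v)) * (sqrt h + h * R powr (2 - 2 * s))))"
proof -
  define M where "M = (SUP v. norm (D2Psi v))"
  obtain B where B: "\<forall>x\<in>range D2Psi. norm x \<le> B" using Psi_hess_bdd unfolding bounded_iff by blast
  have bdd: "bdd_above (range (\<lambda>v. norm (D2Psi v)))" using B by (auto intro!: bdd_aboveI2)
  have Mb: "norm (D2Psi v) \<le> M" for v unfolding M_def by (rule cSUP_upper[OF UNIV_I bdd])
  have M0: "0 \<le> M" using Mb[of 0] norm_ge_zero order_trans by blast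
  define D where "D = real DIM('a)"
  define K where "K = 16 * D\<^sup>2"
  define C where "C = K + 2"
  have K0: "0 \<le> K" unfolding K_def by simp
  have C0: "0 < C" unfolding C_def using K0 by simp
  define I0r where "I0r = (\<integral>z. Psi (snd z) * f0 z \<partial>lborel)"
  have f0n: "0 \<le> f0 z" for z using P2a_D(2)[OF f0] .
  have I0r0: "0 \<le> I0r" unfolding I0r_def
    by (rule integral_nonneg_AE) (use Psi_nonneg f0n in \<open>auto intro!: AE_I2\<close>)
  have I0: "(\<integral>\<^sup>+z. ennreal (Psi (snd z) * f0 z) \<partial>lborel) = ennreal I0r"
    unfolding I0r_def by (rule nn_integral_eq_integral[OF f0_Psi]) (use Psi_nonneg f0n in \<open>auto intro!: AE_I2\<close>)
  show ?thesis
  proof (rule exI[of _ C], rule conjI[OF C0], intro allI)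
    fix N :: nat and R :: real and phi :: "'a \<Rightarrow> real" and fbar f :: "nat \<Rightarrow> ('a \<times> 'a \<Rightarrow> real)"
    define h where "h = T / real N"
    show "let h = T / real N in
      N \<ge> 1 \<longrightarrow> 0 < R \<longrightarrow> frac_heat_kernel s h phi \<longrightarrow>
      f 0 = f0 \<longrightarrow>
      (\<forall>n\<in>{1..N}. fbar n = trunc_conv phi R (f (n - 1))
          \<and> f n \<in> P2a
          \<and> (\<forall>g\<in>P2a. JKO_functional h Psi (fbar n) (f n) \<le> JKO_functional h Psi (fbar n) g)
          \<and> (\<forall>g\<in>P2a. JKO_functional h Psi (fbar n) g \<le> JKO_functional h Psi (fbar n) (f n)
                \<longrightarrow> (AE z in lborel. g z = f n z))) \<longrightarrow>
      (\<Sum>n=1..N. Wh2 h (fbar n) (f n))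
        \<le> ennreal (C * (h * (\<integral>z. Psi (snd z) * f0 z \<partial>lborel)
              + T * (SUP v. norm (D2Psi v)) * (sqrt h + h * R powr (2 - 2 * s))))"
      unfolding Let_def h_def[symmetric]
    proof (intro impI)
      assume N1: "N \<ge> 1" and R: "0 < R" and fhk: "frac_heat_kernel s h phi" and f00: "f 0 = f0"
        and Hyp: "\<forall>n\<in>{1..N}. fbar n = trunc_conv phi R (f (n - 1))
          \<and> f n \<in> P2a
          \<and> (\<forall>g\<in>P2a. JKO_functional h Psi (fbar n) (f n) \<le> JKO_functional h Psi (fbar n) g)
          \<and> (\<forall>g\<in>P2a. JKO_functional h Psi (fbar n) g \<le> JKO_functional h Psi (fbar n) (f n)
                \<longrightarrow> (AE z in lborel. g z = f n z))"
      have h0: "0 < h" unfolding h_def using T N1 by simp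
      have hN: "h * real N = T" unfolding h_def using N1 by simp
      note fb = fhk_basic[OF fhk]
      define m2 where "m2 = (\<integral>w. indicator (cball 0 R) w * phi w * (norm w)\<^sup>2 \<partial>lborel) / (\<integral>w. indicator (cball 0 R) w * phi w \<partial>lborel)"
      have m2b: "m2 \<le> K * h * R powr (2 - 2 * s)"
        unfolding m2_def K_def D_def using fhk_m2[OF fhk R _ s] h0 by simp
      have m20: "0 \<le> m2" unfolding m2_def
        by (intro divide_nonneg_nonneg integral_nonneg_AE) (use fb(3) in \<open>auto intro!: AE_I2\<close>)
      define c where "c = M / 2 * m2"
      have c0: "0 \<le> c" unfolding c_def using M0 m20 by simp
      define I where "I n = (\<integral>\<^sup>+z. ennreal (Psi (snd z) * f n z) \<partial>lborel)" for n
      define W where "W n = Wh2 h (fbar n) (f n)" for n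
      have fP: "f n \<in> P2a" if "n \<le> N" for n
      proof (cases "n = 0")
        case True thus ?thesis using f0 f00 by simp
      next
        case False thus ?thesis using Hyp that by auto
      qed
      have step: "ennreal (1 / (2 * h)) * W n + I n \<le> I (n - 1) + ennreal c" if n: "n \<in> {1..N}" for n
      proof -
        note Hn = bspec[OF Hyp n]
        note H = conjunct1[OF Hn] conjunct1[OF conjunct2[OF Hn]] conjunct1[OF conjunct2[OF conjunct2[OF Hn]]]
          conjunct2[OF conjunct2[OF conjunct2[OF Hn]]]
        have fp: "f (n - 1) \<in> P2a" by (rule fP) (use n in auto)
        show ?thesis unfolding W_def I_def c_def m2_def H(1)
          by (rule jko_step[OF fhk R h0 fp H(2) H(3)[unfolded H(1)] H(4)[unfolded H(1)] Psi_nonneg Psi_grad Psi_hess Mb M0])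
      qed
      have tele: "(\<Sum>n=1..m. ennreal (1 / (2 * h)) * W n) + I m \<le> I 0 + of_nat m * ennreal c" if "m \<le> N" for m
        using that
      proof (induction m)
        case 0 thus ?case by simp
      next
        case (Suc m)
        have IH: "(\<Sum>n=1..m. ennreal (1 / (2 * h)) * W n) + I m \<le> I 0 + of_nat m * ennreal c"
          using Suc by simp
        have st: "ennreal (1 / (2 * h)) * W (Suc m) + I (Suc m) \<le> I m + ennreal c"
          using step[of "Suc m"] Suc.prems by simp
        have "(\<Sum>n=1..Suc m. ennreal (1 / (2 * h)) * W n) + I (Suc m)
            = (\<Sum>n=1..m. ennreal (1 / (2 * h)) * W n) + (ennreal (1 / (2 * h)) * W (Suc m) + I (Suc m))"
          by (simp add: add.assoc)
        also have "\<dots> \<le> (\<Sum>n=1..m. ennreal (1 / (2 * h)) * W n) + (I m + ennreal c)"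
          by (rule add_left_mono[OF st])
        also have "\<dots> = ((\<Sum>n=1..m. ennreal (1 / (2 * h)) * W n) + I m) + ennreal c" by (simp add: add.assoc)
        also have "\<dots> \<le> (I 0 + of_nat m * ennreal c) + ennreal c" by (rule add_right_mono[OF IH])
        also have "\<dots> = I 0 + of_nat (Suc m) * ennreal c" by (simp add: algebra_simps)
        finally show ?case .
      qed
      have "ennreal (1 / (2 * h)) * (\<Sum>n=1..N. W n) = (\<Sum>n=1..N. ennreal (1 / (2 * h)) * W n)"
        by (simp add: sum_distrib_left)
      also have "\<dots> \<le> (\<Sum>n=1..N. ennreal (1 / (2 * h)) * W n) + I N" by simp
      also have "\<dots> \<le> I 0 + of_nat N * ennreal c" by (rule tele) simp
      also have "\<dots> = ennreal (I0r + real N * c)"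
        unfolding I_def f00 I0 using I0r0 c0 by (simp add: ennreal_of_nat_eq_real_of_nat ennreal_mult ennreal_plus)
      finally have le1: "ennreal (1 / (2 * h)) * (\<Sum>n=1..N. W n) \<le> ennreal (I0r + real N * c)" .
      have "(\<Sum>n=1..N. W n) = ennreal (2 * h) * (ennreal (1 / (2 * h)) * (\<Sum>n=1..N. W n))"
      proof -
        have "ennreal (2 * h) * ennreal (1 / (2 * h)) = 1" using h0 by (simp add: ennreal_mult[symmetric])
        thus ?thesis by (simp add: mult.assoc[symmetric])
      qed
      also have "\<dots> \<le> ennreal (2 * h) * ennreal (I0r + real N * c)" by (rule mult_left_mono[OF le1]) simp
      also have "\<dots> = ennreal (2 * h * (I0r + real N * c))" using h0 I0r0 c0 by (simp add: ennreal_mult)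
      also have "\<dots> \<le> ennreal (C * (h * I0r + T * M * (sqrt h + h * R powr (2 - 2 * s))))"
      proof (rule ennreal_leI)
        have e1: "2 * h * (I0r + real N * c) = 2 * (h * I0r) + T * M * m2"
          unfolding c_def using hN by (simp add: algebra_simps)
        have a1: "2 * (h * I0r) \<le> C * (h * I0r)" unfolding C_def using K0 h0 I0r0 by (intro mult_right_mono) auto
        have "T * M * m2 \<le> T * M * (K * h * R powr (2 - 2 * s))"
          using m2b T M0 by (intro mult_left_mono) auto
        also have "\<dots> \<le> T * M * (C * h * R powr (2 - 2 * s))"
          unfolding C_def using T M0 h0 by (intro mult_left_mono mult_right_mono) auto
        finally have a2: "T * M * m2 \<le> C * (T * M * (h * R powr (2 - 2 * s)))" by (simp add: mult_ac)
        have a3: "0 \<le> C * (T * M * sqrt h)" using C0 T M0 h0 by simp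
        have "C * (h * I0r + T * M * (sqrt h + h * R powr (2 - 2 * s)))
            = C * (h * I0r) + C * (T * M * sqrt h) + C * (T * M * (h * R powr (2 - 2 * s)))"
          by (simp add: algebra_simps)
        thus "2 * h * (I0r + real N * c) \<le> C * (h * I0r + T * M * (sqrt h + h * R powr (2 - 2 * s)))"
          using e1 a1 a2 a3 by linarith
      qed
      finally show "(\<Sum>n=1..N. Wh2 h (fbar n) (f n))
        \<le> ennreal (C * (h * (\<integral>z. Psi (snd z) * f0 z \<partial>lborel)
              + T * (SUP v. norm (D2Psi v)) * (sqrt h + h * R powr (2 - 2 * s))))"
        unfolding W_def I0r_def M_def .
    qed
  qed
qed


end
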